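(* For online Steiner Tree with $\Delta$-MRF arrivals, there are instances (with $\Delta\to\infty$) for which no online algorithm is better than $\Omega(\Delta)$-competitive.
   Context: Steiner Tree: a graph $G=(V,E)$ with a root $r\in V$ and edge costs; demands are vertices, and a feasible solution is a set of edges connecting every demand to $r$, with additive cost. Online: demands arrive one by one and after each arrival the algorithm irrevocably buys edges so that all demands so far are connected to $r$. $\Delta$-MRF arrivals: the sequence of $n$ demands $Y=(Y_1,\dots,Y_n)$ is drawn from a known distribution on $\Omega_1\times\dots\times\Omega_n$ of the form $\Pr[u]\propto\exp(\sum_i\psi_i(u_i)+\sum_{e\in E'}\psi_e((u_j)_{j\in e}))$ for a hypergraph $E'\subseteq2^{[n]}$ and potentials, whose weighted maximum degree $\max_i\max_u|\sum_{e\ni i}\psi_e((u_j)_{j\in e})|$ is $\Delta$. An algorithm is $\alpha$-competitive if $\mathbb{E}[\mathrm{ALG}(Y)]\le\alpha\,\mathbb{E}[\mathrm{OPT}(Y)]$. *)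

theory Defs
  imports Complex_Main
begin

text \<open>Vertices are natural numbers; an (undirected) edge is a 2-element vertex set.
  Demand i (0-indexed, i < st_n) takes values in st_Omega i.  The MRF has
  unary potentials st_psi1 i, a hypergraph st_H of subsets of indices, and
  hyperedge potentials st_psi e, which must depend only on coordinates in e.\<close>

record st_instance =
  st_V :: "nat set"
  st_root :: nat
  st_E :: "nat set set"
  st_cost :: "nat set \<Rightarrow> real"
  st_n :: nat
  st_Omega :: "nat \<Rightarrow> nat set"
  st_psi1 :: "nat \<Rightarrow> nat \<Rightarrow> real"
  st_H :: "nat set set"
  st_psi :: "nat set \<Rightarrow> nat list \<Rightarrow> real"

definition edge_rel :: "nat set set \<Rightarrow> (nat \<times> nat) set" where
  "edge_rel F = {(x, y). {x, y} \<in> F}"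

definition connects :: "nat set set \<Rightarrow> nat \<Rightarrow> nat set \<Rightarrow> bool" where
  "connects F r D \<longleftrightarrow> (\<forall>d\<in>D. (r, d) \<in> (edge_rel F)\<^sup>*)"

definition support :: "st_instance \<Rightarrow> nat list set" where
  "support I = {u. length u = st_n I \<and> (\<forall>i<st_n I. u ! i \<in> st_Omega I i)}"

definition instance_ok :: "st_instance \<Rightarrow> bool" where
  "instance_ok I \<longleftrightarrow>
     finite (st_V I) \<and> st_root I \<in> st_V I \<and>
     (\<forall>e\<in>st_E I. e \<subseteq> st_V I \<and> card e = 2) \<and>
     (\<forall>e\<in>st_E I. st_cost I e \<ge> 0) \<and>
     (\<forall>v\<in>st_V I. (st_root I, v) \<in> (edge_rel (st_E I))\<^sup>*) \<and>
     st_n I \<ge> 1 \<and>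
     (\<forall>i<st_n I. finite (st_Omega I i) \<and> st_Omega I i \<noteq> {} \<and> st_Omega I i \<subseteq> st_V I) \<and>
     (\<forall>e\<in>st_H I. e \<subseteq> {..<st_n I}) \<and>
     (\<forall>e\<in>st_H I. \<forall>u\<in>support I. \<forall>u'\<in>support I.
         (\<forall>j\<in>e. u ! j = u' ! j) \<longrightarrow> st_psi I e u = st_psi I e u')"

text \<open>Unnormalised MRF weight; Pr[u] = weight u / (sum of weights over the support).\<close>
definition weight :: "st_instance \<Rightarrow> nat list \<Rightarrow> real" where
  "weight I u = exp ((\<Sum>i<st_n I. st_psi1 I i (u ! i)) + (\<Sum>e\<in>st_H I. st_psi I e u))"

definition expect :: "st_instance \<Rightarrow> (nat list \<Rightarrow> real) \<Rightarrow> real" where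
  "expect I f = (\<Sum>u\<in>support I. weight I u * f u) / (\<Sum>u\<in>support I. weight I u)"

definition mrf_delta :: "st_instance \<Rightarrow> real" where
  "mrf_delta I = Max ((\<lambda>(i, u). \<bar>\<Sum>e\<in>{e\<in>st_H I. i \<in> e}. st_psi I e u\<bar>)
                       ` ({..<st_n I} \<times> support I))"

definition opt :: "st_instance \<Rightarrow> nat list \<Rightarrow> real" where
  "opt I ys = Min (sum (st_cost I) ` {F. F \<subseteq> st_E I \<and> connects F (st_root I) (set ys)})"

text \<open>A deterministic online algorithm A maps the prefix of demands seen so far
  to the set of edges it buys at that step; purchases are irrevocable, so the
  edges held after step t are the union of all purchases up to t.\<close>
definition alg_bought :: "(nat list \<Rightarrow> nat set set) \<Rightarrow> nat list \<Rightarrow> nat \<Rightarrow> nat set set" where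
  "alg_bought A ys t = (\<Union>s\<in>{1..t}. A (take s ys))"

definition online_alg :: "st_instance \<Rightarrow> (nat list \<Rightarrow> nat set set) \<Rightarrow> bool" where
  "online_alg I A \<longleftrightarrow> (\<forall>ys\<in>support I. \<forall>t\<in>{1..st_n I}.
      alg_bought A ys t \<subseteq> st_E I \<and> connects (alg_bought A ys t) (st_root I) (set (take t ys)))"

definition alg_cost :: "st_instance \<Rightarrow> (nat list \<Rightarrow> nat set set) \<Rightarrow> nat list \<Rightarrow> real" where
  "alg_cost I A ys = sum (st_cost I) (alg_bought A ys (st_n I))"

definition competitive :: "st_instance \<Rightarrow> (nat list \<Rightarrow> nat set set) \<Rightarrow> real \<Rightarrow> bool" where
  "competitive I A \<alpha> \<longleftrightarrow> expect I (alg_cost I A) \<le> \<alpha> * expect I (opt I)"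

end

theory Submission
  imports Defs "HOL-Library.Countable" "HOL-Library.Sublist"
begin

definition vx :: "bool list \<Rightarrow> bool list \<Rightarrow> nat" where
  "vx h c = to_nat (h, c) + 2"

definition dec :: "nat \<Rightarrow> bool list \<times> bool list" where
  "dec v = from_nat (v - 2)"

lemma dec_vx[simp]: "dec (vx h c) = (h, c)"
  by (simp add: vx_def dec_def)

lemma vx_inj[simp]: "vx h c = vx h' c' \<longleftrightarrow> h = h' \<and> c = c'"
  by (simp add: vx_def)

lemma vx_ne0[simp]: "vx h c \<noteq> 0" "vx h c \<noteq> 1" "0 \<noteq> vx h c" "1 \<noteq> vx h c"
   "vx h c \<noteq> Suc 0" "Suc 0 \<noteq> vx h c"
  by (auto simp: vx_def)

definition lastp :: "bool \<Rightarrow> bool list \<Rightarrow> bool list" where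
  "lastp b h = rev (tl (dropWhile (\<lambda>x. x \<noteq> b) (rev h)))"

lemma lastp_eq[simp]: "lastp b (h0 @ b # replicate m (\<not> b)) = h0"
  by (simp add: lastp_def dropWhile_append)

lemma lastp_ex: "b \<in> set h \<Longrightarrow> \<exists>m. h = lastp b h @ b # replicate m (\<not> b)"
proof (induction h rule: rev_induct)
  case Nil then show ?case by simp
next
  case (snoc x xs)
  show ?case
  proof (cases "x = b")
    case True
    then show ?thesis by (auto simp: lastp_def)
  next
    case False
    then have x: "x = (\<not> b)" by auto
    have "b \<in> set xs" using snoc False by auto
    then obtain m where m: "xs = lastp b xs @ b # replicate m (\<not> b)" using snoc by blast
    obtain h0 where h0: "h0 = lastp b xs" by blast
    have xs: "xs = h0 @ b # replicate m (\<not> b)" using m h0 by simp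
    have "xs @ [x] = h0 @ b # replicate (Suc m) (\<not> b)"
      unfolding xs x by (simp add: replicate_append_same)
    moreover have "lastp b (h0 @ b # replicate (Suc m) (\<not> b)) = h0" by (rule lastp_eq)
    ultimately show ?thesis by metis
  qed
qed

definition nb :: "bool \<Rightarrow> bool list \<Rightarrow> bool list \<Rightarrow> nat" where
  "nb b h c = (if b \<in> set h then vx (lastp b h) (take (length (lastp b h) + 1) c)
               else (if b then 0 else 1))"

fun hsum :: "bool list \<Rightarrow> real" where
  "hsum [] = 0"
| "hsum (x # xs) = (if x then 1/2 else 0) + hsum xs / 2"

definition pos :: "bool list \<Rightarrow> real" where
  "pos h = hsum h + (1/2) ^ (length h + 1)"

definition posv :: "nat \<Rightarrow> real" where
  "posv v = (if v = 0 then 0 else if v = 1 then 1 else pos (fst (dec v)))"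

lemma posv_vx[simp]: "posv (vx h c) = pos h"
  by (simp add: posv_def)

lemma posv_01[simp]: "posv 0 = 0" "posv 1 = 1"
  by (auto simp: posv_def)

lemma hsum_append: "hsum (xs @ ys) = hsum xs + hsum ys * (1/2) ^ length xs"
  by (induction xs) (auto simp: field_simps)

lemma hsum_repF[simp]: "hsum (replicate m False) = 0"
  by (induction m) auto

lemma hsum_repT: "hsum (replicate m True) = 1 - (1/2) ^ m"
  by (induction m) (auto simp: field_simps)

definition sg :: "bool \<Rightarrow> real" where "sg b = (if b then 1 else -1)"

lemma pos_step: "pos (h0 @ b # replicate m (\<not> b)) = pos h0 + sg b * (1/2) ^ (length h0 + m + 2)"
proof (cases b)
  case True
  then show ?thesis
    by (simp add: pos_def hsum_append sg_def power_add field_simps)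
next
  case False
  then show ?thesis
    by (simp add: pos_def hsum_append hsum_repT sg_def power_add field_simps)
qed

lemma pos_rep: "pos (replicate m (\<not> b)) = (if b then (1/2)^(m+1) else 1 - (1/2)^(m+1))"
  by (cases b) (auto simp: pos_def hsum_repT field_simps)

lemma notin_rep: "b \<notin> set h \<Longrightarrow> h = replicate (length h) (\<not> b)"
  by (induction h) auto

lemma pos_nb: "posv (vx h c) - posv (nb b h c) = sg b * (1/2) ^ (length h + 1)"
proof (cases "b \<in> set h")
  case True
  then obtain m where m: "h = lastp b h @ b # replicate m (\<not> b)" using lastp_ex by blast
  have "pos h = pos (lastp b h) + sg b * (1/2) ^ (length (lastp b h) + m + 2)"
    by (subst m) (rule pos_step)
  moreover have "length h = length (lastp b h) + m + 1"
    by (subst m) simp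
  ultimately show ?thesis using True by (simp add: nb_def)
next
  case False
  then have "h = replicate (length h) (\<not> b)" by (rule notin_rep)
  then have "pos h = (if b then (1/2)^(length h+1) else 1 - (1/2)^(length h+1))"
    by (metis pos_rep)
  then show ?thesis using False by (auto simp: nb_def sg_def posv_def)
qed

definition Ed :: "nat \<Rightarrow> nat set set" where
  "Ed k = {{vx h c, nb b h c} | h c b. length h = k - 1 \<and> length c = k}"

definition intr :: "bool list \<Rightarrow> bool list \<Rightarrow> nat \<Rightarrow> bool" where
  "intr h c v \<longleftrightarrow> (\<exists>h' c'. v = vx h' c' \<and> prefix h h' \<and> prefix c c')"

definition HS :: "nat \<Rightarrow> bool list \<Rightarrow> bool list \<Rightarrow> nat set set" where
  "HS k h c = {X \<in> Ed k. \<exists>p\<in>X. intr h c p}"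

lemma finite_blists: "finite {xs :: bool list. length xs = n}"
  using finite_lists_length_eq[of "UNIV :: bool set" n] by simp

lemma card_blists: "card {xs :: bool list. length xs = n} = 2 ^ n"
  using card_lists_length_eq[of "UNIV :: bool set" n] by simp

lemma Ed_image: "Ed k = (\<lambda>(h, c, b). {vx h c, nb b h c}) ` ({h. length h = k - 1} \<times> {c. length c = k} \<times> UNIV)"
  unfolding Ed_def by auto

lemma finite_Ed: "finite (Ed k)"
  unfolding Ed_image by (intro finite_imageI finite_cartesian_product finite_blists) auto

lemma card_Ed: "card (Ed k) \<le> 2 ^ (k - 1) * 2 ^ k * 2"
proof -
  have "card (Ed k) \<le> card ({h :: bool list. length h = k - 1} \<times> {c :: bool list. length c = k} \<times> (UNIV :: bool set))"
    unfolding Ed_image by (rule card_image_le) (intro finite_cartesian_product finite_blists; simp)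
  also have "\<dots> = 2 ^ (k - 1) * 2 ^ k * 2"
    by (simp add: card_cartesian_product card_blists)
  finally show ?thesis .
qed

lemma prefix_take_mono: "prefix c c1 \<Longrightarrow> length c \<le> n \<Longrightarrow> prefix c (take n c1)"
  by (auto simp: prefix_def)

lemma prefix_take_trans: "prefix c (take n c1) \<Longrightarrow> prefix c c1"
  using take_is_prefix prefix_order.trans by blast

lemma nb_cases:
  "(b \<notin> set h \<and> nb b h c = (if b then 0 else 1)) \<or>
   (\<exists>h0 m. h = h0 @ b # replicate m (\<not> b) \<and> nb b h c = vx h0 (take (length h0 + 1) c))"
proof (cases "b \<in> set h")
  case True
  then obtain m where "h = lastp b h @ b # replicate m (\<not> b)" using lastp_ex by blast
  then show ?thesis using True by (auto simp: nb_def)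
qed (simp add: nb_def)

lemma sg_abs[simp]: "\<bar>sg b\<bar> = 1"
  by (simp add: sg_def)

lemma SL:
  assumes X: "X \<in> Ed k" and p: "p \<in> X" and q: "q \<in> X" and ip: "intr h c p"
    and hk: "length h < k" and hc: "length c = length h + 1"
  shows "intr h c q \<or> \<bar>posv q - pos h\<bar> = (1/2) ^ (length h + 1)"
proof -
  obtain h1 c1 b where X1: "X = {vx h1 c1, nb b h1 c1}" and h1: "length h1 = k - 1" and c1: "length c1 = k"
    using X unfolding Ed_def by blast
  show ?thesis
  proof (cases "p = vx h1 c1")
    case True
    then have ph: "prefix h h1" and pc: "prefix c c1" using ip by (auto simp: intr_def)
    show ?thesis
    proof (cases "q = vx h1 c1")
      case True then show ?thesis using ph pc by (auto simp: intr_def)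
    next
      case False
      then have qn: "q = nb b h1 c1" using q X1 by auto
      from nb_cases[of b h1 c1] show ?thesis
      proof
        assume a: "b \<notin> set h1 \<and> nb b h1 c1 = (if b then 0 else 1)"
        then have "b \<notin> set h" using set_mono_prefix[OF ph] by auto
        then have "h = replicate (length h) (\<not> b)" by (rule notin_rep)
        then have "pos h = (if b then (1/2)^(length h+1) else 1 - (1/2)^(length h+1))"
          by (metis pos_rep)
        then show ?thesis using a qn by (auto simp: posv_def)
      next
        assume "\<exists>h0 m. h1 = h0 @ b # replicate m (\<not> b) \<and> nb b h1 c1 = vx h0 (take (length h0 + 1) c1)"
        then obtain h0 m where h10: "h1 = h0 @ b # replicate m (\<not> b)"
          and nbe: "nb b h1 c1 = vx h0 (take (length h0 + 1) c1)" by blast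
        show ?thesis
        proof (cases "length h \<le> length h0")
          case True
          have "prefix h0 h1" using h10 by simp
          then have "prefix h h0" using prefix_length_prefix[OF ph] True by blast
          moreover have "prefix c (take (length h0 + 1) c1)"
            using prefix_take_mono[OF pc] True hc by simp
          ultimately show ?thesis using qn nbe by (auto simp: intr_def)
        next
          case False
          have lh: "length h \<le> length h1" using prefix_length_le[OF ph] .
          have "h = take (length h) h1" using ph by (auto simp: prefix_def)
          also have "\<dots> = h0 @ b # replicate (length h - length h0 - 1) (\<not> b)"
            using False lh h10 by (simp add: take_append take_Cons' take_replicate)
          finally have he: "h = h0 @ b # replicate (length h - length h0 - 1) (\<not> b)" .
          have ex: "length h0 + (length h - length h0 - 1) + 2 = length h + 1"
            using False by simp
          have "pos h = pos h0 + sg b * (1/2) ^ (length h0 + (length h - length h0 - 1) + 2)"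
            by (subst he) (rule pos_step)
          then have "pos h = pos h0 + sg b * (1/2) ^ (length h + 1)" unfolding ex .
          then have "\<bar>pos h0 - pos h\<bar> = (1/2) ^ (length h + 1)"
            by (simp add: abs_mult)
          then show ?thesis using qn nbe by simp
        qed
      qed
    qed
  next
    case False
    then have pn: "p = nb b h1 c1" using p X1 by auto
    obtain h' c' where pv: "p = vx h' c'" and ph: "prefix h h'" and pc: "prefix c c'"
      using ip by (auto simp: intr_def)
    from nb_cases[of b h1 c1] show ?thesis
    proof
      assume "b \<notin> set h1 \<and> nb b h1 c1 = (if b then 0 else 1)"
      then show ?thesis using pn pv by (auto split: if_splits)
    next
      assume "\<exists>h0 m. h1 = h0 @ b # replicate m (\<not> b) \<and> nb b h1 c1 = vx h0 (take (length h0 + 1) c1)"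
      then obtain h0 m where h10: "h1 = h0 @ b # replicate m (\<not> b)"
          and nbe: "nb b h1 c1 = vx h0 (take (length h0 + 1) c1)" by blast
      have "h' = h0" "c' = take (length h0 + 1) c1" using pn pv nbe by auto
      then have "prefix h h1" using ph h10 by (auto simp: prefix_def)
      moreover have "prefix c c1" using pc \<open>c' = _\<close> prefix_take_trans by blast
      ultimately have "intr h c (vx h1 c1)" by (auto simp: intr_def)
      moreover have "q = vx h1 c1 \<or> q = p" using q X1 pn by auto
      ultimately show ?thesis using ip by auto
    qed
  qed
qed

lemma EP:
  assumes X: "X \<in> Ed k" and p: "p \<in> X" and q: "q \<in> X" and k: "k \<ge> 1"
  shows "\<bar>posv p - posv q\<bar> \<le> (1/2) ^ k"
proof -
  obtain h1 c1 b where X1: "X = {vx h1 c1, nb b h1 c1}" and h1: "length h1 = k - 1"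
    using X unfolding Ed_def by blast
  have e: "\<bar>posv (vx h1 c1) - posv (nb b h1 c1)\<bar> = (1/2) ^ k"
    using pos_nb[of h1 c1 b] h1 k by (simp add: abs_mult)
  then show ?thesis using p q X1 by (auto simp: abs_minus_commute)
qed

lemma crossing:
  assumes "(a, v) \<in> (edge_rel F)\<^sup>*" "a \<notin> C" "v \<in> C"
  shows "\<exists>x y. {x, y} \<in> F \<and> x \<in> C \<and> y \<notin> C"
  using assms
proof (induction rule: rtrancl_induct)
  case base then show ?case by simp
next
  case (step y z)
  show ?case
  proof (cases "y \<in> C")
    case True then show ?thesis using step by blast
  next
    case False
    then have "{z, y} \<in> F" using step(2) by (auto simp: edge_rel_def insert_commute)
    then show ?thesis using False step(5) by blast
  qed
qed

lemma cut:
  assumes F: "F \<subseteq> Ed k" and conn: "(0, vx h c) \<in> (edge_rel F)\<^sup>*"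
    and hk: "length h < k" and hc: "length c = length h + 1"
  shows "2 ^ (k - length h - 1) \<le> card (F \<inter> HS k h c)"
proof -
  have k1: "k \<ge> 1" using hk by simp
  define \<delta> :: real where "\<delta> = (1/2) ^ k"
  define D :: nat where "D = 2 ^ (k - length h - 1)"
  have \<delta>pos: "\<delta> > 0" by (simp add: \<delta>_def)
  have WD: "(1/2) ^ (length h + 1) = real D * \<delta>"
  proof -
    have "k = (k - length h - 1) + (length h + 1)" using hk by simp
    then have "(1/2::real) ^ k = (1/2) ^ (k - length h - 1) * (1/2) ^ (length h + 1)"
      by (metis power_add)
    then show ?thesis by (simp add: D_def \<delta>_def power_one_over field_simps)
  qed
  define dist where "dist p = \<bar>posv p - pos h\<bar>" for p
  define C where "C \<theta> = {p. intr h c p \<and> dist p < real \<theta> * \<delta>}" for \<theta> :: nat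
  have ihc: "intr h c (vx h c)" by (auto simp: intr_def)
  have ex: "\<exists>X. X \<in> F \<and> (\<exists>x y. X = {x, y} \<and> x \<in> C \<theta> \<and> y \<notin> C \<theta>)" if "\<theta> \<ge> 1" for \<theta>
  proof -
    have "0 \<notin> C \<theta>" by (auto simp: C_def intr_def)
    moreover have "vx h c \<in> C \<theta>" using ihc that \<delta>pos by (auto simp: C_def dist_def)
    ultimately show ?thesis using crossing[OF conn] by blast
  qed
  define e where "e \<theta> = (SOME X. X \<in> F \<and> (\<exists>x y. X = {x, y} \<and> x \<in> C \<theta> \<and> y \<notin> C \<theta>))" for \<theta>
  have e: "e \<theta> \<in> F \<and> (\<exists>x y. e \<theta> = {x, y} \<and> x \<in> C \<theta> \<and> y \<notin> C \<theta>)" if "\<theta> \<ge> 1" for \<theta>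
    unfolding e_def using someI_ex[OF ex[OF that]] .
  have key: "dist x \<ge> real \<theta> * \<delta> - \<delta> \<and> dist x < real \<theta> * \<delta>"
    if "{x, y} \<in> F" "x \<in> C \<theta>" "y \<notin> C \<theta>" "\<theta> \<le> D" for x y \<theta>
  proof -
    have XE: "{x, y} \<in> Ed k" using that F by auto
    have ix: "intr h c x" and dx: "dist x < real \<theta> * \<delta>" using that by (auto simp: C_def)
    have dy: "dist y \<ge> real \<theta> * \<delta>"
    proof (cases "intr h c y")
      case True then show ?thesis using that by (auto simp: C_def)
    next
      case False
      then have "dist y = real D * \<delta>" using SL[OF XE _ _ ix hk hc, of y] WD by (auto simp: dist_def)
      moreover have "real \<theta> * \<delta> \<le> real D * \<delta>" using that \<delta>pos by (intro mult_right_mono) auto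
      ultimately show ?thesis by simp
    qed
    have "\<bar>posv x - posv y\<bar> \<le> \<delta>" using EP[OF XE _ _ k1, of x y] by (auto simp: \<delta>_def)
    then have "dist x \<ge> dist y - \<delta>" by (auto simp: dist_def)
    then show ?thesis using dy dx by simp
  qed
  have Csub: "C \<theta>1 \<subseteq> C \<theta>2" if "\<theta>1 \<le> \<theta>2" for \<theta>1 \<theta>2
  proof -
    have "real \<theta>1 * \<delta> \<le> real \<theta>2 * \<delta>" using that \<delta>pos by (intro mult_right_mono) auto
    then show ?thesis by (auto simp: C_def)
  qed
  have noteq: "e \<theta>1 \<noteq> e \<theta>2" if th: "1 \<le> \<theta>1" "\<theta>1 < \<theta>2" "\<theta>2 \<le> D" for \<theta>1 \<theta>2
  proof
    assume eq: "e \<theta>1 = e \<theta>2"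
    obtain x1 y1 where X1: "e \<theta>1 = {x1, y1}" "x1 \<in> C \<theta>1" "y1 \<notin> C \<theta>1" "e \<theta>1 \<in> F"
      using e[OF th(1)] by blast
    obtain x2 y2 where X2: "e \<theta>2 = {x2, y2}" "x2 \<in> C \<theta>2" "y2 \<notin> C \<theta>2" "e \<theta>2 \<in> F"
      using e[of \<theta>2] th by (meson le_trans less_imp_le_nat)
    have k1': "dist x1 < real \<theta>1 * \<delta>" using key[of x1 y1 \<theta>1] X1 th by auto
    have k2': "dist x2 \<ge> real \<theta>2 * \<delta> - \<delta>" using key[of x2 y2 \<theta>2] X2 th by auto
    have "x1 \<in> C \<theta>2" using Csub[of \<theta>1 \<theta>2] X1 th by auto
    have "{x1, y1} = {x2, y2}" using eq X1 X2 by simp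
    then consider "x1 = x2" | "x1 = y2" by (auto simp: doubleton_eq_iff)
    then show False
    proof cases
      case 1
      have "real \<theta>1 * \<delta> \<le> real \<theta>2 * \<delta> - \<delta>"
      proof -
        have "real \<theta>1 + 1 \<le> real \<theta>2" using th by simp
        then have "(real \<theta>1 + 1) * \<delta> \<le> real \<theta>2 * \<delta>" using \<delta>pos by (intro mult_right_mono) auto
        then show ?thesis by (simp add: algebra_simps)
      qed
      then show False using k1' k2' 1 by simp
    next
      case 2 then show False using \<open>x1 \<in> C \<theta>2\<close> X2 by simp
    qed
  qed
  have inj: "inj_on e {1..D}"
  proof (rule inj_onI)
    fix a b assume a: "a \<in> {1..D}" and b: "b \<in> {1..D}" and eq: "e a = e b"
    show "a = b"
    proof (rule ccontr)
      assume "a \<noteq> b"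
      then have "a < b \<or> b < a" by auto
      then show False using noteq[of a b] noteq[of b a] a b eq by auto
    qed
  qed
  have sub: "e ` {1..D} \<subseteq> F \<inter> HS k h c"
  proof
    fix X assume "X \<in> e ` {1..D}"
    then obtain \<theta> where th: "\<theta> \<in> {1..D}" "X = e \<theta>" by auto
    then have "\<theta> \<ge> 1" by simp
    then obtain x y where "X = {x, y}" "x \<in> C \<theta>" "X \<in> F" using e[of \<theta>] th by blast
    then show "X \<in> F \<inter> HS k h c" using F by (auto simp: HS_def C_def)
  qed
  have fin: "finite (F \<inter> HS k h c)" using finite_Ed F by (meson finite_Int finite_subset)
  have "card {1..D} \<le> card (F \<inter> HS k h c)"
    using card_inj_on_le[OF inj sub fin] .
  then show ?thesis by (simp add: D_def)
qed

lemma lastp_snoc_same[simp]: "lastp b (h @ [b]) = h"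
  by (simp add: lastp_def)

lemma lastp_snoc_other[simp]: "lastp b (h @ [\<not> b]) = lastp b h"
  by (simp add: lastp_def)

lemma lastp_len: "b \<in> set h \<Longrightarrow> length (lastp b h) < length h"
proof -
  assume "b \<in> set h"
  then obtain m where m: "h = lastp b h @ b # replicate m (\<not> b)" using lastp_ex by blast
  have "length h = length (lastp b h @ b # replicate m (\<not> b))" using m by (rule arg_cong)
  then show ?thesis by simp
qed

lemma nb_snoc_same: "length c' = length h + 2 \<Longrightarrow> nb b (h @ [b]) c' = vx h (take (length h + 1) c')"
  by (simp add: nb_def)

lemma nb_snoc_other:
  assumes "prefix c c'" "length c = length h + 1"
  shows "nb b (h @ [\<not> b]) c' = nb b h c"
proof (cases "b \<in> set h")
  case True
  have "length (lastp b h) + 1 \<le> length c" using lastp_len[OF True] assms(2) by simp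
  then have "take (length (lastp b h) + 1) c' = take (length (lastp b h) + 1) c"
    using assms(1) by (auto simp: prefix_def)
  then show ?thesis using True by (simp add: nb_def)
next
  case False
  then show ?thesis by (simp add: nb_def)
qed

lemma edge_rel_sym: "(x, y) \<in> (edge_rel F)\<^sup>* \<Longrightarrow> (y, x) \<in> (edge_rel F)\<^sup>*"
proof -
  assume "(x, y) \<in> (edge_rel F)\<^sup>*"
  then have "(y, x) \<in> ((edge_rel F)\<inverse>)\<^sup>*" by (simp add: rtrancl_converseI)
  moreover have "(edge_rel F)\<inverse> = edge_rel F" by (auto simp: edge_rel_def insert_commute)
  ultimately show ?thesis by simp
qed

definition Flab :: "nat \<Rightarrow> (bool list \<Rightarrow> bool list) \<Rightarrow> nat set set" where
  "Flab k lab = {{vx h (lab h), nb b h (lab h)} | h b. length h = k - 1}"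

definition goodlab :: "nat \<Rightarrow> (bool list \<Rightarrow> bool list) \<Rightarrow> bool" where
  "goodlab k lab \<longleftrightarrow> (\<forall>h. length h < k \<longrightarrow> length (lab h) = length h + 1) \<and>
     (\<forall>h b. length h + 1 < k \<longrightarrow> prefix (lab h) (lab (h @ [b])))"

lemma Flab_sub: "goodlab k lab \<Longrightarrow> k \<ge> 1 \<Longrightarrow> Flab k lab \<subseteq> Ed k"
proof
  fix X assume g: "goodlab k lab" and k: "k \<ge> 1" and "X \<in> Flab k lab"
  then obtain h b where X: "X = {vx h (lab h), nb b h (lab h)}" and h: "length h = k - 1"
    unfolding Flab_def by blast
  have "length (lab h) = k" using g h k unfolding goodlab_def by auto
  then show "X \<in> Ed k" using X h unfolding Ed_def by blast
qed

lemma card_Flab: "k \<ge> 1 \<Longrightarrow> card (Flab k lab) \<le> 2 ^ k"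
proof -
  assume "k \<ge> 1"
  let ?S = "{h :: bool list. length h = k - 1} \<times> (UNIV :: bool set)"
  let ?f = "\<lambda>(h, b). {vx h (lab h), nb b h (lab h)}"
  have e: "Flab k lab = ?f ` ?S"
    unfolding Flab_def by auto
  have fin: "finite ?S" using finite_blists by simp
  have "card (?f ` ?S) \<le> card ?S" using card_image_le[OF fin] .
  also have "card ?S = 2 ^ (k - 1) * 2" by (simp add: card_cartesian_product card_blists)
  also have "\<dots> \<le> 2 ^ k" using \<open>k \<ge> 1\<close> by (cases k) auto
  finally show ?thesis using e by simp
qed

lemma Qlab:
  assumes g: "goodlab k lab" and hk: "length h < k"
  shows "(vx h (lab h), nb b h (lab h)) \<in> (edge_rel (Flab k lab))\<^sup>*"
  using hk
proof (induction "k - 1 - length h" arbitrary: h b)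
  case 0
  then have "length h = k - 1" by simp
  then have "{vx h (lab h), nb b h (lab h)} \<in> Flab k lab" unfolding Flab_def by blast
  then show ?case by (auto simp: edge_rel_def)
next
  case (Suc d)
  let ?g = "h @ [\<not> b]"
  have gk: "length ?g < k" and dg: "d = k - 1 - length ?g" using Suc by auto
  have lh: "length (lab h) = length h + 1" using g Suc(3) by (auto simp: goodlab_def)
  have lg: "length (lab ?g) = length h + 2" using g gk by (auto simp: goodlab_def)
  have pr: "prefix (lab h) (lab ?g)" using g gk by (auto simp: goodlab_def)
  have e1: "nb b ?g (lab ?g) = nb b h (lab h)" using nb_snoc_other[OF pr lh] .
  have "nb (\<not> b) ?g (lab ?g) = vx h (take (length h + 1) (lab ?g))"
    using nb_snoc_same[OF lg, of "\<not> b"] by simp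
  also have "take (length h + 1) (lab ?g) = lab h" using pr lh by (auto simp: prefix_def)
  finally have e2: "nb (\<not> b) ?g (lab ?g) = vx h (lab h)" .
  have a1: "(vx ?g (lab ?g), nb b ?g (lab ?g)) \<in> (edge_rel (Flab k lab))\<^sup>*"
    using Suc(1)[OF dg gk] .
  have a2: "(vx ?g (lab ?g), nb (\<not> b) ?g (lab ?g)) \<in> (edge_rel (Flab k lab))\<^sup>*"
    using Suc(1)[OF dg gk] .
  have b1: "(vx ?g (lab ?g), nb b h (lab h)) \<in> (edge_rel (Flab k lab))\<^sup>*" using a1 e1 by simp
  have b2: "(vx h (lab h), vx ?g (lab ?g)) \<in> (edge_rel (Flab k lab))\<^sup>*"
    using a2 e2 edge_rel_sym by simp
  show ?case using rtrancl_trans[OF b2 b1] .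
qed

lemma Plab:
  assumes g: "goodlab k lab" and hk: "length h < k"
  shows "(0, vx h (lab h)) \<in> (edge_rel (Flab k lab))\<^sup>* \<and> (\<forall>b. (0, nb b h (lab h)) \<in> (edge_rel (Flab k lab))\<^sup>*)"
  using hk
proof (induction h rule: rev_induct)
  case Nil
  have n0: "nb True [] c = 0" and n1: "nb False [] c = 1" for c by (auto simp: nb_def)
  have q0: "(vx [] (lab []), 0) \<in> (edge_rel (Flab k lab))\<^sup>*" using Qlab[OF g Nil, of True] n0 by simp
  have q1: "(vx [] (lab []), 1) \<in> (edge_rel (Flab k lab))\<^sup>*" using Qlab[OF g Nil, of False] n1 by simp
  have a: "(0, vx [] (lab [])) \<in> (edge_rel (Flab k lab))\<^sup>*" using edge_rel_sym[OF q0] .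
  have b: "(0, 1) \<in> (edge_rel (Flab k lab))\<^sup>*" using rtrancl_trans[OF a q1] .
  have "(0, nb b [] (lab [])) \<in> (edge_rel (Flab k lab))\<^sup>*" for b
  proof (cases b)
    case True then show ?thesis using n0 by simp
  next
    case False then show ?thesis using n1 b by simp
  qed
  then show ?case using a by blast
next
  case (snoc x h)
  have hk: "length h < k" using snoc by simp
  note IH = snoc(1)[OF hk]
  have lh: "length (lab h) = length h + 1" using g hk by (auto simp: goodlab_def)
  have lg: "length (lab (h @ [x])) = length h + 2" using g snoc(2) by (auto simp: goodlab_def)
  have pr: "prefix (lab h) (lab (h @ [x]))" using g snoc(2) by (auto simp: goodlab_def)
  have tk: "take (length h + 1) (lab (h @ [x])) = lab h" using pr lh by (auto simp: prefix_def)
  have nbs: "(0, nb b (h @ [x]) (lab (h @ [x]))) \<in> (edge_rel (Flab k lab))\<^sup>*" for b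
  proof (cases "x = b")
    case True
    then show ?thesis using nb_snoc_same[OF lg, of b] tk IH by simp
  next
    case False
    then have "x = (\<not> b)" by auto
    then show ?thesis using nb_snoc_other[OF pr lh, of b] IH by simp
  qed
  have "(vx (h @ [x]) (lab (h @ [x])), nb True (h @ [x]) (lab (h @ [x]))) \<in> (edge_rel (Flab k lab))\<^sup>*"
    using Qlab[OF g snoc(2)] .
  then have "(nb True (h @ [x]) (lab (h @ [x])), vx (h @ [x]) (lab (h @ [x]))) \<in> (edge_rel (Flab k lab))\<^sup>*"
    by (rule edge_rel_sym)
  then have "(0, vx (h @ [x]) (lab (h @ [x]))) \<in> (edge_rel (Flab k lab))\<^sup>*"
    using rtrancl_trans[OF nbs[of True]] by blast
  then show ?case using nbs by blast
qed

definition idx :: "bool list \<Rightarrow> nat" where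
  "idx h = foldl (\<lambda>a b. 2 * a + (if b then 1 else 0)) 1 h"

lemma idx_Nil[simp]: "idx [] = 1"
  by (simp add: idx_def)

lemma idx_snoc[simp]: "idx (h @ [b]) = 2 * idx h + (if b then 1 else 0)"
  by (simp add: idx_def)

lemma idx_bounds: "2 ^ length h \<le> idx h \<and> idx h < 2 ^ (length h + 1)"
  by (induction h rule: rev_induct) auto

lemma idx_ge1: "idx h \<ge> 1"
  using idx_bounds[of h] by (meson le_trans one_le_numeral one_le_power)

fun hsof :: "nat \<Rightarrow> bool list" where
  "hsof i = (if i \<le> 1 then [] else hsof (i div 2) @ [odd i])"

declare hsof.simps[simp del]

lemma idx_hsof: "i \<ge> 1 \<Longrightarrow> idx (hsof i) = i"
proof (induction i rule: hsof.induct)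
  case (1 i)
  show ?case
  proof (cases "i \<le> 1")
    case True then show ?thesis using 1 by (simp add: hsof.simps)
  next
    case False
    then have "idx (hsof (i div 2)) = i div 2" using 1 by simp
    then show ?thesis using False by (simp add: hsof.simps)
  qed
qed

lemma hsof_idx[simp]: "hsof (idx h) = h"
proof (induction h rule: rev_induct)
  case Nil then show ?case by (simp add: hsof.simps)
next
  case (snoc b h)
  have ge: "idx h \<ge> 1" by (rule idx_ge1)
  have "(2 * idx h + (if b then 1 else 0)) div 2 = idx h" by auto
  moreover have "odd (2 * idx h + (if b then 1 else 0)) = b" by auto
  ultimately show ?case using snoc ge by (subst hsof.simps) auto
qed

lemma idx_inj[simp]: "idx h = idx h' \<longleftrightarrow> h = h'"
  by (metis hsof_idx)

lemma hsof_len: "i \<ge> 1 \<Longrightarrow> i < 2 ^ k \<Longrightarrow> length (hsof i) < k"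
proof -
  assume a: "i \<ge> 1" "i < 2 ^ k"
  have "2 ^ length (hsof i) \<le> i" using idx_bounds[of "hsof i"] idx_hsof[OF a(1)] by simp
  then have "(2::nat) ^ length (hsof i) < 2 ^ k" using a by (meson le_less_trans)
  then show ?thesis by (simp add: power_strict_increasing_iff)
qed

lemma idx_lt: "length h < k \<Longrightarrow> idx h < 2 ^ k"
proof -
  assume "length h < k"
  then have "(2::nat) ^ (length h + 1) \<le> 2 ^ k" by (intro power_increasing) auto
  then show ?thesis using idx_bounds[of h] by simp
qed

definition Om :: "nat \<Rightarrow> nat set" where
  "Om i = (if i = 0 then {1} else {vx (hsof i) c | c. length c = length (hsof i) + 1})"

definition Hyp :: "nat \<Rightarrow> nat set set" where
  "Hyp k = {{idx h, idx (h @ [b])} | h b. length h + 1 < k}"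

definition cons_v :: "nat \<Rightarrow> nat \<Rightarrow> bool" where
  "cons_v a b \<longleftrightarrow> prefix (snd (dec a)) (snd (dec b))"

definition psiL :: "real \<Rightarrow> nat set \<Rightarrow> nat list \<Rightarrow> real" where
  "psiL L e u = (if cons_v (u ! Min e) (u ! Max e) then L else 0)"

definition Vset :: "nat \<Rightarrow> nat set" where
  "Vset k = {0, 1} \<union> {vx h c | h c. length h < k \<and> length c = length h + 1}"

definition inst :: "nat \<Rightarrow> real \<Rightarrow> st_instance" where
  "inst k L = \<lparr>st_V = Vset k, st_root = 0, st_E = Ed k, st_cost = (\<lambda>_. 1), st_n = 2 ^ k,
     st_Omega = Om, st_psi1 = (\<lambda>_ _. 0), st_H = Hyp k, st_psi = psiL L\<rparr>"

lemma inst_simps[simp]: "st_V (inst k L) = Vset k" "st_root (inst k L) = 0" "st_E (inst k L) = Ed k"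
  "st_cost (inst k L) = (\<lambda>_. 1)" "st_n (inst k L) = 2 ^ k" "st_Omega (inst k L) = Om"
  "st_psi1 (inst k L) = (\<lambda>_ _. 0)" "st_H (inst k L) = Hyp k" "st_psi (inst k L) = psiL L"
  by (simp_all add: inst_def)

lemma Hyp_MinMax:
  assumes "e = {idx h, idx (h @ [b])}"
  shows "Min e = idx h" "Max e = idx (h @ [b])"
proof -
  have "idx h < idx (h @ [b])" using idx_ge1[of h] by simp
  then show "Min e = idx h" "Max e = idx (h @ [b])" using assms by auto
qed

lemma finite_Vset: "finite (Vset k)"
proof -
  have e: "{vx h c | h c. length h < k \<and> length c = length h + 1} =
        (\<lambda>(h, c). vx h c) ` {(h, c). length h < k \<and> length c = length h + 1}"
    by auto
  have "{(h :: bool list, c :: bool list). length h < k \<and> length c = length h + 1} \<subseteq>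
        {h :: bool list. set h \<subseteq> UNIV \<and> length h \<le> k} \<times> {c :: bool list. set c \<subseteq> UNIV \<and> length c \<le> k + 1}"
    by auto
  moreover have "finite ({h :: bool list. set h \<subseteq> UNIV \<and> length h \<le> k} \<times> {c :: bool list. set c \<subseteq> UNIV \<and> length c \<le> k + 1})"
    by (intro finite_cartesian_product finite_lists_length_le) auto
  ultimately have "finite {(h :: bool list, c :: bool list). length h < k \<and> length c = length h + 1}"
    by (rule finite_subset)
  then have "finite {vx h c | h c. length h < k \<and> length c = length h + 1}"
    unfolding e by (rule finite_imageI)
  then show ?thesis unfolding Vset_def by simp
qed

lemma edge_rel_mono: "F \<subseteq> G \<Longrightarrow> (x, y) \<in> (edge_rel F)\<^sup>* \<Longrightarrow> (x, y) \<in> (edge_rel G)\<^sup>*"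
proof -
  assume "F \<subseteq> G" "(x, y) \<in> (edge_rel F)\<^sup>*"
  moreover have "edge_rel F \<subseteq> edge_rel G" using \<open>F \<subseteq> G\<close> by (auto simp: edge_rel_def)
  ultimately show ?thesis using rtrancl_mono by blast
qed

definition labc :: "nat \<Rightarrow> bool list \<Rightarrow> bool list \<Rightarrow> bool list" where
  "labc k c g = take (length g + 1) (c @ replicate k False)"

lemma prefix_take_take: "n \<le> m \<Longrightarrow> prefix (take n xs) (take m xs)"
proof -
  assume "n \<le> m"
  then have "take n xs = take n (take m xs)" by (simp add: min_def)
  then show ?thesis using take_is_prefix by metis
qed

lemma goodlab_labc: "length c \<le> k \<Longrightarrow> goodlab k (labc k c)"
  unfolding goodlab_def labc_def
  by (intro conjI allI impI prefix_take_take) auto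

lemma all_conn:
  assumes k: "k \<ge> 1" and v: "v \<in> Vset k"
  shows "(0, v) \<in> (edge_rel (Ed k))\<^sup>*"
proof -
  have gl: "goodlab k (labc k [])" by (rule goodlab_labc) simp
  consider "v = 0" | "v = 1" | h c where "v = vx h c" "length h < k" "length c = length h + 1"
    using v unfolding Vset_def by blast
  then show ?thesis
  proof cases
    case 1 then show ?thesis by simp
  next
    case 2
    have "(0, nb False [] (labc k [] [])) \<in> (edge_rel (Flab k (labc k [])))\<^sup>*"
      using Plab[OF gl, of "[]"] k by simp
    then have "(0, 1) \<in> (edge_rel (Flab k (labc k [])))\<^sup>*" by (simp add: nb_def)
    then show ?thesis using 2 edge_rel_mono[OF Flab_sub[OF gl k]] by blast
  next
    case 3
    have gl3: "goodlab k (labc k c)" by (rule goodlab_labc) (use 3 in simp)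
    have "labc k c h = c" using 3 by (simp add: labc_def)
    then have "(0, vx h c) \<in> (edge_rel (Flab k (labc k c)))\<^sup>*"
      using Plab[OF gl3 3(2)] by simp
    then show ?thesis using 3 edge_rel_mono[OF Flab_sub[OF gl3 k]] by blast
  qed
qed

lemma inst_ok: assumes k: "k \<ge> 2" shows "instance_ok (inst k L)"
  unfolding instance_ok_def
proof (simp only: inst_simps, intro conjI ballI allI impI)
  have k1: "k \<ge> 1" using k by simp
  show "finite (Vset k)" by (rule finite_Vset)
  show "0 \<in> Vset k" by (simp add: Vset_def)
  fix e assume "e \<in> Ed k"
  then obtain h c b where e: "e = {vx h c, nb b h c}" "length h = k - 1" "length c = k"
    unfolding Ed_def by blast
  have in1: "vx h c \<in> Vset k" using e k1 unfolding Vset_def by auto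
  have in2: "nb b h c \<in> Vset k \<and> nb b h c \<noteq> vx h c"
  proof (cases "b \<in> set h")
    case True
    have "length (lastp b h) < length h" by (rule lastp_len[OF True])
    then show ?thesis using True e k1 unfolding Vset_def nb_def by auto
  next
    case False then show ?thesis unfolding Vset_def nb_def by auto
  qed
  show "e \<subseteq> Vset k" using in1 in2 e by auto
  show "card e = 2" using in2 e by auto
next
  fix e :: "nat set" show "0 \<le> (1::real)" by simp
next
  fix v assume "v \<in> Vset k"
  then show "(0, v) \<in> (edge_rel (Ed k))\<^sup>*" using all_conn k by simp
next
  show "1 \<le> (2::nat) ^ k" by simp
next
  fix i assume i: "i < (2::nat) ^ k"
  show "finite (Om i)"
  proof (cases "i = 0")
    case False
    have "Om i = (\<lambda>c. vx (hsof i) c) ` {c. length c = length (hsof i) + 1}"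
      using False unfolding Om_def by auto
    then show ?thesis using finite_blists by simp
  qed (simp add: Om_def)
  show "Om i \<noteq> {}"
  proof (cases "i = 0")
    case False
    have "vx (hsof i) (replicate (length (hsof i) + 1) False) \<in> Om i"
      using False unfolding Om_def by auto
    then show ?thesis by blast
  qed (simp add: Om_def)
  show "Om i \<subseteq> Vset k"
  proof (cases "i = 0")
    case False
    then have "length (hsof i) < k" using hsof_len i by simp
    then show ?thesis using False unfolding Om_def Vset_def by auto
  qed (simp add: Om_def Vset_def)
next
  fix e assume "e \<in> Hyp k"
  then obtain h b where e: "e = {idx h, idx (h @ [b])}" "length h + 1 < k"
    unfolding Hyp_def by blast
  have "idx h < 2 ^ k" "idx (h @ [b]) < 2 ^ k" using idx_lt e(2) by (auto simp del: idx_snoc)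
  then show "e \<subseteq> {..<2 ^ k}" using e by auto
next
  fix e :: "nat set" and u u' :: "nat list"
  assume eH: "e \<in> Hyp k" and "u \<in> support (inst k L)" "u' \<in> support (inst k L)"
    and agree: "\<forall>j\<in>e. u ! j = u' ! j"
  then obtain h b where e: "e = {idx h, idx (h @ [b])}"
    unfolding Hyp_def by blast
  have "Min e \<in> e" "Max e \<in> e" using Hyp_MinMax[OF e] e by auto
  then show "psiL L e u = psiL L e u'" using agree by (simp add: psiL_def)
qed

definition swp :: "bool list \<Rightarrow> bool list \<Rightarrow> bool list \<Rightarrow> bool list" where
  "swp a b c = (if prefix a c then b @ drop (length a) c else if prefix b c then a @ drop (length b) c else c)"

lemma prefix_take_eq: "prefix c1 c2 \<Longrightarrow> n \<le> length c1 \<Longrightarrow> take n c2 = take n c1"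
  by (auto simp: prefix_def)

lemma prefix_iff_take: "prefix a c \<longleftrightarrow> length a \<le> length c \<and> take (length a) c = a"
  by (auto simp: prefix_def) (metis append_take_drop_id)

lemma swp_len: "length a = length b \<Longrightarrow> length (swp a b c) = length c"
  by (auto simp: swp_def dest: prefix_length_le)

lemma swp_inv: "length a = length b \<Longrightarrow> swp b a (swp a b c) = c"
proof -
  assume l: "length a = length b"
  show ?thesis
  proof (cases "prefix a c")
    case True
    then show ?thesis using l by (auto simp: swp_def prefix_def)
  next
    case na: False
    show ?thesis
    proof (cases "prefix b c")
      case True
      have "\<not> prefix b (a @ drop (length b) c)"
      proof
        assume "prefix b (a @ drop (length b) c)"
        moreover have "b = a \<Longrightarrow> False" using na True by simp
        moreover have "prefix b (a @ drop (length b) c) \<Longrightarrow> b = a"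
        proof -
          assume "prefix b (a @ drop (length b) c)"
        then have "take (length b) (a @ drop (length b) c) = b" by (simp add: prefix_iff_take)
        then show "b = a" using l by simp
        qed
        ultimately show False by blast
      qed
      then show ?thesis using na True l by (auto simp: swp_def prefix_def)
    next
      case False
      then show ?thesis using na by (simp add: swp_def)
    qed
  qed
qed

lemma swp_prefix:
  assumes l: "length a = length b" and la: "length a \<le> length c1" and p: "prefix c1 c2"
  shows "prefix (swp a b c1) (swp a b c2)"
proof -
  have t: "take (length a) c2 = take (length a) c1" using prefix_take_eq[OF p la] .
  have l2: "length a \<le> length c2" using la prefix_length_le[OF p] by simp
  have pa: "prefix a c2 \<longleftrightarrow> prefix a c1" using t la l2 by (simp add: prefix_iff_take)
  have pb: "prefix b c2 \<longleftrightarrow> prefix b c1" using t la l2 l by (simp add: prefix_iff_take)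
  obtain zs where c2: "c2 = c1 @ zs" using p by (auto simp: prefix_def)
  show ?thesis using pa pb la l unfolding swp_def c2 by (auto simp: prefix_def)
qed

lemma swp_prefix_iff:
  assumes l: "length a = length b" and la: "length a \<le> length c1"
  shows "prefix (swp a b c1) (swp a b c2) \<longleftrightarrow> prefix c1 c2"
proof
  assume "prefix (swp a b c1) (swp a b c2)"
  moreover have "length b \<le> length (swp a b c1)" using swp_len[OF l] la l by simp
  ultimately have "prefix (swp b a (swp a b c1)) (swp b a (swp a b c2))"
    using swp_prefix[of b a] l by simp
  then show "prefix c1 c2" using swp_inv[OF l] by simp
qed (rule swp_prefix[OF l la])

definition vmap :: "bool list \<Rightarrow> bool list \<Rightarrow> nat \<Rightarrow> nat" where
  "vmap a b v = vx (fst (dec v)) (swp a b (snd (dec v)))"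

definition SW :: "bool list \<Rightarrow> bool list \<Rightarrow> bool list \<Rightarrow> nat list \<Rightarrow> nat list" where
  "SW h a b u = map (\<lambda>i. if 1 \<le> i \<and> prefix h (hsof i) then vmap a b (u ! i) else u ! i) [0..<length u]"

lemma SW_len[simp]: "length (SW h a b u) = length u"
  by (simp add: SW_def)

lemma SW_nth: "i < length u \<Longrightarrow> SW h a b u ! i = (if 1 \<le> i \<and> prefix h (hsof i) then vmap a b (u ! i) else u ! i)"
  by (simp add: SW_def)

definition cs :: "nat list \<Rightarrow> bool list \<Rightarrow> bool list" where
  "cs u h = snd (dec (u ! idx h))"

lemma idx_mono: "prefix h g \<Longrightarrow> idx h \<le> idx g"
proof -
  assume "prefix h g"
  then obtain zs where "g = h @ zs" by (auto simp: prefix_def)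
  moreover have "idx h \<le> idx (h @ zs)" for zs
  proof (induction zs rule: rev_induct)
    case (snoc x zs)
    have "idx (h @ zs @ [x]) = idx ((h @ zs) @ [x])" by simp
    also have "\<dots> \<ge> idx (h @ zs)" by (simp only: idx_snoc)
    finally show ?case using snoc by simp
  qed simp
  ultimately show ?thesis by simp
qed

locale L0 =
  fixes k :: nat and L :: real
  assumes k2: "k \<ge> 2" and Lpos: "L \<ge> 0"
begin

abbreviation "I \<equiv> inst k L"
abbreviation "S \<equiv> support I"

lemma S_def': "S = {u. length u = 2 ^ k \<and> (\<forall>i<2 ^ k. u ! i \<in> Om i)}"
  by (simp add: support_def)

lemma S_slot:
  assumes u: "u \<in> S" and h: "length h < k"
  shows "u ! idx h = vx h (cs u h)" "length (cs u h) = length h + 1"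
proof -
  have "idx h < 2 ^ k" using idx_lt[OF h] .
  then have "u ! idx h \<in> Om (idx h)" using u by (simp add: S_def')
  moreover have "idx h \<noteq> 0" using idx_ge1[of h] by simp
  ultimately obtain c where "u ! idx h = vx h c" "length c = length h + 1"
    unfolding Om_def by auto
  then show "u ! idx h = vx h (cs u h)" "length (cs u h) = length h + 1"
    by (auto simp: cs_def)
qed

lemma S_len: "u \<in> S \<Longrightarrow> length u = 2 ^ k"
  by (simp add: S_def')

lemma S_0: "u \<in> S \<Longrightarrow> u ! 0 = 1"
proof -
  assume "u \<in> S"
  moreover have "0 < (2::nat) ^ k" by simp
  ultimately have "u ! 0 \<in> Om 0" by (simp add: S_def')
  then show ?thesis by (simp add: Om_def)
qed

lemma finite_S: "finite S"
proof -
  have "S \<subseteq> {u. set u \<subseteq> Vset k \<and> length u = 2 ^ k}"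
  proof
    fix u assume u: "u \<in> S"
    have "u ! i \<in> Vset k" if "i < length u" for i
    proof -
      have "i < 2 ^ k" using that u by (simp add: S_def')
      then have "u ! i \<in> Om i" using u by (simp add: S_def')
      moreover have "Om i \<subseteq> Vset k" using inst_ok[OF k2, of L] \<open>i < 2 ^ k\<close>
        unfolding instance_ok_def by simp
      ultimately show ?thesis by blast
    qed
    then show "u \<in> {u. set u \<subseteq> Vset k \<and> length u = 2 ^ k}" using u
      by (auto simp: S_def' in_set_conv_nth)
  qed
  moreover have "finite {u. set u \<subseteq> Vset k \<and> length u = 2 ^ k}"
    by (rule finite_lists_length_eq[OF finite_Vset])
  ultimately show ?thesis by (rule finite_subset)
qed

lemma SW_S:
  assumes u: "u \<in> S" and l: "length a = length b"
  shows "SW h a b u \<in> S"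
  unfolding S_def'
proof (intro CollectI conjI allI impI)
  show "length (SW h a b u) = 2 ^ k" using u by (simp add: S_def')
  fix i assume i: "i < (2::nat) ^ k"
  have li: "i < length u" using i u by (simp add: S_def')
  show "SW h a b u ! i \<in> Om i"
  proof (cases "1 \<le> i \<and> prefix h (hsof i)")
    case True
    have hl: "length (hsof i) < k" using hsof_len True i by simp
    have "u ! i = vx (hsof i) (cs u (hsof i))" "length (cs u (hsof i)) = length (hsof i) + 1"
      using S_slot[OF u hl] idx_hsof True by auto
    then show ?thesis using True li swp_len[OF l] by (auto simp: SW_nth vmap_def Om_def)
  next
    case False
    have "SW h a b u ! i = u ! i" using li False by (auto simp: SW_nth)
    then show ?thesis using u i by (simp add: S_def')
  qed
qed

lemma SW_cs:
  assumes u: "u \<in> S" and g: "length g < k"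
  shows "cs (SW h a b u) g = (if prefix h g then swp a b (cs u g) else cs u g)"
proof -
  have li: "idx g < length u" using idx_lt[OF g] u by (simp add: S_def')
  have "1 \<le> idx g" by (rule idx_ge1)
  then show ?thesis using li S_slot[OF u g] by (simp add: SW_nth cs_def vmap_def)
qed

lemma SW_take:
  assumes u: "u \<in> S"
  shows "take (idx h) (SW h a b u) = take (idx h) u"
proof (rule nth_equalityI)
  show "length (take (idx h) (SW h a b u)) = length (take (idx h) u)" by simp
  fix i assume "i < length (take (idx h) (SW h a b u))"
  then have i: "i < idx h" "i < length u" by auto
  have "\<not> (1 \<le> i \<and> prefix h (hsof i))"
  proof
    assume a: "1 \<le> i \<and> prefix h (hsof i)"
    then have "idx h \<le> idx (hsof i)" using idx_mono by blast
    then show False using a idx_hsof i by simp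
  qed
  then have "SW h a b u ! i = u ! i" using i by (auto simp: SW_nth)
  then show "take (idx h) (SW h a b u) ! i = take (idx h) u ! i" using i by simp
qed

lemma SW_inv:
  assumes u: "u \<in> S" and l: "length a = length b"
  shows "SW h b a (SW h a b u) = u"
proof (rule nth_equalityI)
  show "length (SW h b a (SW h a b u)) = length u" by simp
  fix i assume "i < length (SW h b a (SW h a b u))"
  then have li: "i < length u" by simp
  show "SW h b a (SW h a b u) ! i = u ! i"
  proof (cases "1 \<le> i \<and> prefix h (hsof i)")
    case True
    have hl: "length (hsof i) < k" using hsof_len True li u by (simp add: S_def')
    have "u ! i = vx (hsof i) (cs u (hsof i))"
      using S_slot[OF u hl] idx_hsof True by auto
    then show ?thesis using True li swp_inv[OF l] by (simp add: SW_nth vmap_def)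
  next
    case False
    have "SW h a b u ! i = u ! i" using li False by (auto simp: SW_nth)
    moreover have "SW h b a (SW h a b u) ! i = SW h a b u ! i" using li False by (auto simp: SW_nth)
    ultimately show ?thesis by simp
  qed
qed

end

declare idx_snoc[simp del]

definition flipl :: "bool list \<Rightarrow> bool list" where
  "flipl c = butlast c @ [\<not> last c]"

lemma flipl_len[simp]: "c \<noteq> [] \<Longrightarrow> length (flipl c) = length c"
  by (simp add: flipl_def)

lemma flipl_flipl: "c \<noteq> [] \<Longrightarrow> flipl (flipl c) = c"
  by (simp add: flipl_def)

lemma flipl_ne: "c \<noteq> [] \<Longrightarrow> flipl c \<noteq> c"
proof
  assume "c \<noteq> []" "flipl c = c"
  then have "last (flipl c) = last c" by simp
  then show False by (simp add: flipl_def)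
qed

lemma prefix_butlast_iff: "length p + 1 = length c \<Longrightarrow> prefix p c \<longleftrightarrow> p = butlast c"
proof -
  assume l: "length p + 1 = length c"
  have "butlast c = take (length p) c" using l[symmetric] by (simp add: butlast_conv_take)
  then show ?thesis using l by (auto simp: prefix_iff_take)
qed

lemma prefix_flipl: "length p + 1 = length c \<Longrightarrow> prefix p (flipl c) \<longleftrightarrow> prefix p c"
proof -
  assume l: "length p + 1 = length c"
  then have c: "c \<noteq> []" by auto
  have "prefix p (flipl c) \<longleftrightarrow> p = butlast (flipl c)" using prefix_butlast_iff[of p "flipl c"] l c by simp
  also have "butlast (flipl c) = butlast c" by (simp add: flipl_def)
  finally show ?thesis using prefix_butlast_iff[OF l] by simp
qed

lemma Hyp_unique:
  assumes "{idx g, idx (g @ [x])} = {idx g', idx (g' @ [x'])}"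
  shows "g = g' \<and> x = x'"
proof -
  have "Min {idx g, idx (g @ [x])} = idx g" "Max {idx g, idx (g @ [x])} = idx (g @ [x])"
    using Hyp_MinMax by auto
  moreover have "Min {idx g', idx (g' @ [x'])} = idx g'" "Max {idx g', idx (g' @ [x'])} = idx (g' @ [x'])"
    using Hyp_MinMax by auto
  ultimately have "idx g = idx g'" "idx (g @ [x]) = idx (g' @ [x'])" using assms by metis+
  then show ?thesis by (simp del: idx_snoc)
qed

lemma psi_cs: "psiL L {idx g, idx (g @ [x])} u = (if prefix (cs u g) (cs u (g @ [x])) then L else 0)"
  using Hyp_MinMax[of "{idx g, idx (g @ [x])}" g x] by (simp add: psiL_def cons_v_def cs_def)

context L0
begin

definition Phi :: "nat list \<Rightarrow> real" where
  "Phi u = (\<Sum>e\<in>Hyp k. psiL L e u)"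

lemma weight_Phi: "weight I u = exp (Phi u)"
  by (simp add: weight_def Phi_def)

lemma finite_Hyp: "finite (Hyp k)"
proof -
  have "Hyp k = (\<lambda>(h, b). {idx h, idx (h @ [b])}) ` (({h. set h \<subseteq> UNIV \<and> length h \<le> k} \<inter> {h. length h + 1 < k}) \<times> UNIV)"
    unfolding Hyp_def by auto
  moreover have "finite (({h :: bool list. set h \<subseteq> UNIV \<and> length h \<le> k} \<inter> {h. length h + 1 < k}) \<times> (UNIV :: bool set))"
    by (intro finite_cartesian_product finite_Int disjI1 finite_lists_length_le) auto
  ultimately show ?thesis by simp
qed

definition good :: "nat list \<Rightarrow> bool" where
  "good u \<longleftrightarrow> (\<forall>g x. length g + 1 < k \<longrightarrow> prefix (cs u g) (cs u (g @ [x])))"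

definition GG :: "nat list \<Rightarrow> bool list \<Rightarrow> bool" where
  "GG u h \<longleftrightarrow> (\<forall>g x. prefix (g @ [x]) h \<longrightarrow> prefix (cs u g) (cs u (g @ [x])))"

lemma good_GG: "good u \<Longrightarrow> length h < k \<Longrightarrow> GG u h"
  unfolding good_def GG_def
  by (metis Suc_eq_plus1 le_less_trans length_append_singleton prefix_length_le)

lemma pair_pres:
  assumes u: "u \<in> S" and l: "length a = length b" and la: "length a \<le> length h + 1"
    and g: "length g + 1 < k" and ne: "g @ [x] \<noteq> h"
  shows "prefix (cs (SW h a b u) g) (cs (SW h a b u) (g @ [x])) \<longleftrightarrow> prefix (cs u g) (cs u (g @ [x]))"
proof -
  have g1: "length g < k" and g2: "length (g @ [x]) < k" using g by auto
  show ?thesis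
  proof (cases "prefix h g")
    case True
    then have "prefix h (g @ [x])" by simp
    moreover have "length a \<le> length (cs u g)"
      using S_slot(2)[OF u g1] la prefix_length_le[OF True] by simp
    ultimately show ?thesis using True SW_cs[OF u g1] SW_cs[OF u g2] swp_prefix_iff[OF l] by simp
  next
    case False
    then have "\<not> prefix h (g @ [x])" using ne by simp
    then show ?thesis using False SW_cs[OF u g1] SW_cs[OF u g2] by simp
  qed
qed

definition sig :: "bool list \<Rightarrow> nat list \<Rightarrow> nat list" where
  "sig h u = SW h (cs u h) (flipl (cs u h)) u"

lemma sig_facts:
  assumes u: "u \<in> S" and h: "length h < k"
  shows "sig h u \<in> S" "cs (sig h u) h = flipl (cs u h)" "sig h (sig h u) = u"
    "take (idx h) (sig h u) = take (idx h) u" "Phi (sig h u) = Phi u" "GG (sig h u) h = GG u h"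
proof -
  let ?a = "cs u h" let ?b = "flipl (cs u h)"
  have la: "length ?a = length h + 1" using S_slot(2)[OF u h] .
  then have ne: "?a \<noteq> []" by auto
  have l: "length ?a = length ?b" using ne by simp
  show S1: "sig h u \<in> S" unfolding sig_def by (rule SW_S[OF u l])
  show c1: "cs (sig h u) h = ?b" unfolding sig_def using SW_cs[OF u h] by (simp add: swp_def)
  show "sig h (sig h u) = u"
    unfolding sig_def[of h "sig h u"] c1 flipl_flipl[OF ne] unfolding sig_def
    by (rule SW_inv[OF u l])
  show "take (idx h) (sig h u) = take (idx h) u" unfolding sig_def by (rule SW_take[OF u])
  have pp: "prefix (cs (sig h u) g) (cs (sig h u) (g @ [x])) \<longleftrightarrow> prefix (cs u g) (cs u (g @ [x]))"
    if g: "length g + 1 < k" "g @ [x] = h \<or> prefix (g @ [x]) h \<or> True" for g x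
  proof (cases "g @ [x] = h")
    case True
    have g1: "length g < k" using g by simp
    have "\<not> prefix h g" using True by (auto dest: prefix_length_le)
    then have "cs (sig h u) g = cs u g" unfolding sig_def using SW_cs[OF u g1] by simp
    moreover have "length (cs u g) + 1 = length ?a" using S_slot(2)[OF u g1] la True[symmetric] by simp
    ultimately show ?thesis using c1 prefix_flipl True by simp
  next
    case False
    show ?thesis unfolding sig_def using pair_pres[OF u l _ g(1) False] la by simp
  qed
  show "Phi (sig h u) = Phi u"
    unfolding Phi_def
  proof (rule sum.cong[OF refl])
    fix e assume "e \<in> Hyp k"
    then obtain g x where e: "e = {idx g, idx (g @ [x])}" "length g + 1 < k" unfolding Hyp_def by blast
    show "psiL L e (sig h u) = psiL L e u" using pp[OF e(2)] e(1) by (simp add: psi_cs)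
  qed
  show "GG (sig h u) h = GG u h"
    unfolding GG_def
  proof (intro iff_allI imp_cong[OF refl])
    fix g x assume "prefix (g @ [x]) h"
    then have "length g + 1 < k" using h prefix_length_le by fastforce
    then show "prefix (cs (sig h u) g) (cs (sig h u) (g @ [x])) = prefix (cs u g) (cs u (g @ [x]))"
      using pp by blast
  qed
qed

end

context L0
begin

definition wt :: "nat list \<Rightarrow> real" where "wt u = weight I u"

lemma wt_pos: "wt u > 0"
  by (simp add: wt_def weight_Phi)

definition Z :: real where "Z = (\<Sum>u\<in>S. wt u)"

definition viol :: "bool list \<Rightarrow> bool \<Rightarrow> nat list \<Rightarrow> bool" where
  "viol g x u \<longleftrightarrow> \<not> prefix (cs u g) (cs u (g @ [x]))"

definition Pm :: "bool list \<Rightarrow> bool \<Rightarrow> nat list \<Rightarrow> nat list" where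
  "Pm g x u = SW (g @ [x]) (take (length g + 1) (cs u (g @ [x]))) (cs u g) u"

lemma Pm_facts:
  assumes u: "u \<in> S" and g: "length g + 1 < k" and v: "viol g x u"
  shows "Pm g x u \<in> S" "cs (Pm g x u) g = cs u g" "Phi (Pm g x u) = Phi u + L"
proof -
  let ?h = "g @ [x]"
  let ?a = "take (length g + 1) (cs u ?h)" let ?b = "cs u g"
  have g1: "length g < k" and h1: "length ?h < k" using g by auto
  have lh: "length (cs u ?h) = length g + 2" using S_slot(2)[OF u h1] by simp
  have lg: "length ?b = length g + 1" using S_slot(2)[OF u g1] .
  have l: "length ?a = length ?b" using lh lg by simp
  show "Pm g x u \<in> S" unfolding Pm_def by (rule SW_S[OF u l])
  have npg: "\<not> prefix ?h g" by (auto dest: prefix_length_le)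
  show cg: "cs (Pm g x u) g = cs u g" unfolding Pm_def using SW_cs[OF u g1] npg by simp
  have "prefix ?a (cs u ?h)" by (rule take_is_prefix)
  then have "cs (Pm g x u) ?h = ?b @ drop (length ?a) (cs u ?h)"
    unfolding Pm_def using SW_cs[OF u h1] by (simp add: swp_def)
  then have p0: "prefix (cs (Pm g x u) g) (cs (Pm g x u) ?h)" using cg by simp
  let ?e0 = "{idx g, idx ?h}"
  have e0: "?e0 \<in> Hyp k" using g unfolding Hyp_def by blast
  have fin: "finite (Hyp k)" by (rule finite_Hyp)
  have rest: "psiL L e (Pm g x u) = psiL L e u" if e: "e \<in> Hyp k - {?e0}" for e
  proof -
    obtain g' x' where e': "e = {idx g', idx (g' @ [x'])}" "length g' + 1 < k"
      using e unfolding Hyp_def by blast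
    have ne: "g' @ [x'] \<noteq> ?h" using e e' by auto
    have la: "length ?a \<le> length ?h + 1" using lh by simp
    show ?thesis unfolding Pm_def e'(1) psi_cs using pair_pres[OF u l la e'(2) ne] by simp
  qed
  have "Phi (Pm g x u) = psiL L ?e0 (Pm g x u) + (\<Sum>e\<in>Hyp k - {?e0}. psiL L e (Pm g x u))"
    unfolding Phi_def using sum.remove[OF fin e0] by blast
  also have "\<dots> = L + (\<Sum>e\<in>Hyp k - {?e0}. psiL L e u)"
    using p0 rest by (simp add: psi_cs)
  also have "\<dots> = L + Phi u"
    unfolding Phi_def using sum.remove[OF fin e0, of "\<lambda>e. psiL L e u"] v
    by (simp add: psi_cs viol_def)
  finally show "Phi (Pm g x u) = Phi u + L" by simp
qed

definition u0 :: "nat list" where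
  "u0 = map (\<lambda>i. if i = 0 then 1 else vx (hsof i) (replicate (length (hsof i) + 1) False)) [0..<2 ^ k]"

lemma u0_S: "u0 \<in> S"
  unfolding S_def' u0_def by (auto simp: Om_def)

lemma u0_cs: "length h < k \<Longrightarrow> cs u0 h = replicate (length h + 1) False"
proof -
  assume "length h < k"
  then have "idx h < 2 ^ k" by (rule idx_lt)
  then show ?thesis using idx_ge1[of h] by (simp add: cs_def u0_def)
qed

lemma u0_good: "good u0"
  unfolding good_def
proof (intro allI impI)
  fix g :: "bool list" and x :: bool assume "length g + 1 < k"
  then have "length g < k" "length (g @ [x]) < k" by auto
  then have "cs u0 g = replicate (length g + 1) False" "cs u0 (g @ [x]) = replicate (length g + 1) False @ [False]"
    using u0_cs by (auto simp: replicate_append_same)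
  then show "prefix (cs u0 g) (cs u0 (g @ [x]))" by simp
qed

lemma Z_pos: "Z > 0"
proof -
  have "S \<noteq> {}" using u0_S by blast
  then show ?thesis unfolding Z_def using finite_S wt_pos by (simp add: sum_pos)
qed

end

context L0
begin

lemma wt_Pm: "u \<in> S \<Longrightarrow> length g + 1 < k \<Longrightarrow> viol g x u \<Longrightarrow> wt u = exp (- L) * wt (Pm g x u)"
  using Pm_facts(3)[of u g x] by (simp add: wt_def weight_Phi exp_add[symmetric] exp_diff)

lemma viol_bound:
  assumes g: "length g + 1 < k"
  shows "(\<Sum>u\<in>{u\<in>S. viol g x u}. wt u) \<le> 2 ^ (length g + 1) * exp (- L) * Z"
proof -
  let ?h = "g @ [x]"
  let ?A = "{u\<in>S. viol g x u}"
  let ?T = "{t :: bool list. length t = length g + 1}"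
  let ?p = "\<lambda>u. take (length g + 1) (cs u ?h)"
  have g1: "length g < k" and h1: "length ?h < k" using g by auto
  have finA: "finite ?A" using finite_S by simp
  have finT: "finite ?T" by (rule finite_blists)
  have pT: "?p ` ?A \<subseteq> ?T" using S_slot(2)[OF _ h1] by auto
  have grp: "(\<Sum>t\<in>?T. \<Sum>u\<in>{u. u \<in> ?A \<and> ?p u = t}. wt u) = (\<Sum>u\<in>?A. wt u)"
    by (rule sum.group[OF finA finT pT])
  have each: "(\<Sum>u\<in>{u. u \<in> ?A \<and> ?p u = t}. wt u) \<le> exp (- L) * Z" if t: "t \<in> ?T" for t
  proof -
    let ?At = "{u. u \<in> ?A \<and> ?p u = t}"
    have inj: "inj_on (Pm g x) ?At"
    proof (rule inj_onI)
      fix u1 u2 assume u1: "u1 \<in> ?At" and u2: "u2 \<in> ?At" and eq: "Pm g x u1 = Pm g x u2"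
      have rec: "u = SW ?h (cs (Pm g x u) g) t (Pm g x u)" if u: "u \<in> ?At" for u
      proof -
        have uS: "u \<in> S" and vu: "viol g x u" and pu: "?p u = t" using u by auto
        have lt: "length t = length (cs u g)" using t S_slot(2)[OF uS g1] by simp
        have "Pm g x u = SW ?h t (cs u g) u" unfolding Pm_def using pu by simp
        then have "SW ?h (cs u g) t (Pm g x u) = u" using SW_inv[OF uS lt] by simp
        then show ?thesis using Pm_facts(2)[OF uS g vu] by simp
      qed
      show "u1 = u2" using rec[OF u1] rec[OF u2] eq by simp
    qed
    have img: "Pm g x ` ?At \<subseteq> S" using Pm_facts(1)[OF _ g] by auto
    have "(\<Sum>u\<in>?At. wt u) = (\<Sum>u\<in>?At. exp (- L) * wt (Pm g x u))"
      using wt_Pm[OF _ g] by (intro sum.cong) auto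
    also have "\<dots> = exp (- L) * (\<Sum>u\<in>?At. wt (Pm g x u))" by (simp add: sum_distrib_left)
    also have "(\<Sum>u\<in>?At. wt (Pm g x u)) = (\<Sum>v\<in>Pm g x ` ?At. wt v)"
      by (rule sum.reindex_cong[OF inj refl, symmetric]) simp
    also have "\<dots> \<le> Z" unfolding Z_def
      using finite_S img wt_pos by (intro sum_mono2) (auto intro: less_imp_le)
    finally show ?thesis by (simp add: mult_left_mono)
  qed
  have "(\<Sum>u\<in>?A. wt u) \<le> (\<Sum>t\<in>?T. exp (- L) * Z)"
    unfolding grp[symmetric] by (rule sum_mono) (rule each)
  also have "\<dots> = 2 ^ (length g + 1) * exp (- L) * Z" by (simp add: card_blists)
  finally show ?thesis .
qed

lemma card_short: "card {g :: bool list. length g < m} \<le> 2 ^ m"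
proof -
  have "idx ` {g :: bool list. length g < m} \<subseteq> {..<2 ^ m}" using idx_lt by auto
  moreover have "inj_on idx {g :: bool list. length g < m}" by (rule inj_onI) simp
  ultimately have "card {g :: bool list. length g < m} \<le> card {..<(2::nat) ^ m}"
    by (intro card_inj_on_le) auto
  then show ?thesis by simp
qed

lemma finite_short: "finite {g :: bool list. length g < m}"
  using finite_lists_length_le[of "UNIV :: bool set" m] by (rule rev_finite_subset) auto

lemma bad_bound: "(\<Sum>u\<in>{u\<in>S. \<not> good u}. wt u) \<le> 2 ^ (2 * k + 1) * exp (- L) * Z"
proof -
  let ?P = "{g :: bool list. length g + 1 < k} \<times> (UNIV :: bool set)"
  have finP: "finite ?P" using finite_short[of "k - 1"]
    by (intro finite_cartesian_product) (auto intro: rev_finite_subset)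
  have cardP: "card ?P \<le> 2 ^ (k + 1)"
  proof -
    have "card {g :: bool list. length g + 1 < k} \<le> card {g :: bool list. length g < k}"
      by (intro card_mono finite_short) auto
    also have "\<dots> \<le> 2 ^ k" by (rule card_short)
    finally show ?thesis by (simp add: card_cartesian_product)
  qed
  have pw: "(if \<not> good u then wt u else 0) \<le> (\<Sum>p\<in>?P. if viol (fst p) (snd p) u then wt u else 0)"
    for u
  proof (cases "good u")
    case False
    then obtain g x where gx: "length g + 1 < k" "viol g x u" unfolding good_def viol_def by blast
    have "(if viol (fst (g, x)) (snd (g, x)) u then wt u else 0) \<le> (\<Sum>p\<in>?P. if viol (fst p) (snd p) u then wt u else 0)"
      using gx finP wt_pos by (intro member_le_sum) (auto intro: less_imp_le)
    then show ?thesis using False gx by simp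
  qed (simp add: sum_nonneg less_imp_le wt_pos)
  have "(\<Sum>u\<in>{u\<in>S. \<not> good u}. wt u) = (\<Sum>u\<in>S. if \<not> good u then wt u else 0)"
    using finite_S by (simp add: sum.inter_filter)
  also have "\<dots> \<le> (\<Sum>u\<in>S. \<Sum>p\<in>?P. if viol (fst p) (snd p) u then wt u else 0)"
    by (rule sum_mono) (rule pw)
  also have "\<dots> = (\<Sum>p\<in>?P. \<Sum>u\<in>S. if viol (fst p) (snd p) u then wt u else 0)"
    by (rule sum.swap)
  also have "\<dots> = (\<Sum>p\<in>?P. \<Sum>u\<in>{u\<in>S. viol (fst p) (snd p) u}. wt u)"
    using finite_S by (simp add: sum.inter_filter)
  also have "\<dots> \<le> (\<Sum>p\<in>?P. 2 ^ k * exp (- L) * Z)"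
  proof (rule sum_mono)
    fix p assume "p \<in> ?P"
    then have g: "length (fst p) + 1 < k" by auto
    have p1: "(2::real) ^ (length (fst p) + 1) \<le> 2 ^ k" using g by (intro power_increasing) auto
    have p2: "exp (- L) * Z \<ge> 0" using Z_pos by simp
    have B: "(2::real) ^ (length (fst p) + 1) * (exp (- L) * Z) \<le> 2 ^ k * (exp (- L) * Z)"
      by (rule mult_right_mono[OF p1 p2])
    have A: "(\<Sum>u\<in>{u\<in>S. viol (fst p) (snd p) u}. wt u) \<le> 2 ^ (length (fst p) + 1) * exp (- L) * Z"
      by (rule viol_bound[OF g])
    show "(\<Sum>u\<in>{u\<in>S. viol (fst p) (snd p) u}. wt u) \<le> 2 ^ k * exp (- L) * Z"
      using order_trans[OF A B[unfolded mult.assoc[symmetric]]] .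
  qed
  also have "\<dots> = real (card ?P) * (2 ^ k * exp (- L) * Z)" by (rule sum_constant)
  also have "\<dots> \<le> 2 ^ (k + 1) * (2 ^ k * exp (- L) * Z)"
  proof (rule mult_right_mono)
    have "real (card ?P) \<le> real ((2::nat) ^ (k + 1))" using cardP by (simp only: of_nat_le_iff)
    then show "real (card ?P) \<le> 2 ^ (k + 1)" by (simp only: of_nat_power of_nat_numeral)
    show "0 \<le> 2 ^ k * exp (- L) * Z" using Z_pos by simp
  qed
  also have "\<dots> = ((2::real) ^ (k + 1) * 2 ^ k) * exp (- L) * Z" by (simp only: mult.assoc)
  also have "(2::real) ^ (k + 1) * 2 ^ k = 2 ^ (2 * k + 1)"
    by (simp only: power_add[symmetric]) (simp add: algebra_simps)
  finally show ?thesis .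
qed

end

context L0
begin

lemma cost_card: "sum (st_cost I) F = real (card F)"
  by simp

definition Fs :: "nat list \<Rightarrow> nat set set set" where
  "Fs u = {F. F \<subseteq> Ed k \<and> connects F 0 (set u)}"

lemma finite_Fs: "finite (Fs u)"
proof -
  have "Fs u \<subseteq> Pow (Ed k)" unfolding Fs_def by auto
  then show ?thesis using finite_Ed by (meson finite_Pow_iff finite_subset)
qed

lemma set_S: "u \<in> S \<Longrightarrow> set u \<subseteq> Vset k"
proof
  fix v assume u: "u \<in> S" and "v \<in> set u"
  then obtain i where i: "i < length u" "u ! i = v" by (auto simp: in_set_conv_nth)
  then have "i < 2 ^ k" using u by (simp add: S_def')
  then have "v \<in> Om i" using u i by (auto simp: S_def')
  moreover have "Om i \<subseteq> Vset k" using inst_ok[OF k2, of L] \<open>i < 2 ^ k\<close>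
    unfolding instance_ok_def by simp
  ultimately show "v \<in> Vset k" by blast
qed

lemma Ed_Fs: "u \<in> S \<Longrightarrow> Ed k \<in> Fs u"
proof -
  assume u: "u \<in> S"
  have "(0, d) \<in> (edge_rel (Ed k))\<^sup>*" if "d \<in> set u" for d
    using all_conn[of k d] set_S[OF u] that k2 by auto
  then show ?thesis unfolding Fs_def connects_def by auto
qed

lemma opt_eq: "opt I u = Min ((\<lambda>F. real (card F)) ` Fs u)"
  unfolding opt_def Fs_def by simp

lemma opt_le: "u \<in> S \<Longrightarrow> F \<in> Fs u \<Longrightarrow> opt I u \<le> real (card F)"
  unfolding opt_eq using finite_Fs by (intro Min_le) auto

lemma opt_all: "u \<in> S \<Longrightarrow> opt I u \<le> 4 ^ k"
proof -
  assume u: "u \<in> S"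
  have "opt I u \<le> real (card (Ed k))" by (rule opt_le[OF u Ed_Fs[OF u]])
  also have "real (card (Ed k)) \<le> real (2 ^ (k - 1) * 2 ^ k * 2)" using card_Ed by (simp only: of_nat_le_iff)
  also have "(2::nat) ^ (k - 1) * 2 ^ k * 2 = 4 ^ k"
  proof -
    have "(2::nat) ^ (k - 1) * 2 = 2 ^ k" using k2 by (cases k) auto
    then have "(2::nat) ^ (k - 1) * 2 ^ k * 2 = 2 ^ k * 2 ^ k" by (simp add: ac_simps)
    also have "\<dots> = 4 ^ k" by (simp add: power_mult_distrib[symmetric])
    finally show ?thesis .
  qed
  finally show ?thesis by simp
qed

lemma opt_ge1: "u \<in> S \<Longrightarrow> opt I u \<ge> 1"
proof -
  assume u: "u \<in> S"
  have ne: "Fs u \<noteq> {}" using Ed_Fs[OF u] by blast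
  have "real (card F) \<ge> 1" if F: "F \<in> Fs u" for F
  proof -
    have "1 \<in> set u" using u S_0[OF u] S_len[OF u] by (metis nth_mem zero_less_numeral zero_less_power)
    then have c: "(0, 1) \<in> (edge_rel F)\<^sup>*" using F unfolding Fs_def connects_def by auto
    have "F \<noteq> {}"
    proof
      assume "F = {}"
      then have "edge_rel F = {}" by (simp add: edge_rel_def)
      then show False using c by simp
    qed
    moreover have "finite F" using F finite_Ed[of k] unfolding Fs_def by (auto intro: finite_subset)
    ultimately show ?thesis by (simp add: Suc_leI card_gt_0_iff)
  qed
  then show ?thesis unfolding opt_eq using finite_Fs ne by (subst Min_ge_iff) auto
qed

lemma opt_good:
  assumes u: "u \<in> S" and g: "good u"
  shows "opt I u \<le> 2 ^ k"
proof -
  have gl: "goodlab k (cs u)" unfolding goodlab_def using S_slot(2)[OF u] g by (auto simp: good_def)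
  have k1: "k \<ge> 1" using k2 by simp
  have conn: "connects (Flab k (cs u)) 0 (set u)"
    unfolding connects_def
  proof
    fix d assume "d \<in> set u"
    then obtain i where i: "i < length u" "u ! i = d" by (auto simp: in_set_conv_nth)
    have ik: "i < 2 ^ k" using i u by (simp add: S_def')
    show "(0, d) \<in> (edge_rel (Flab k (cs u)))\<^sup>*"
    proof (cases "i = 0")
      case True
      then have "d = 1" using S_0[OF u] i by simp
      moreover have "nb False [] (cs u []) = 1" by (simp add: nb_def)
      moreover have "(0, nb False [] (cs u [])) \<in> (edge_rel (Flab k (cs u)))\<^sup>*"
        using Plab[OF gl, of "[]"] k1 by auto
      ultimately show ?thesis by simp
    next
      case False
      then have hl: "length (hsof i) < k" using hsof_len ik by simp
      have "d = vx (hsof i) (cs u (hsof i))" using S_slot(1)[OF u hl] idx_hsof False i by simp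
      then show ?thesis using Plab[OF gl hl] by simp
    qed
  qed
  have "Flab k (cs u) \<in> Fs u" unfolding Fs_def using Flab_sub[OF gl k1] conn by simp
  then have "opt I u \<le> real (card (Flab k (cs u)))" by (rule opt_le[OF u])
  also have "\<dots> \<le> 2 ^ k" using card_Flab[OF k1, of "cs u"]
    by (metis of_nat_le_iff of_nat_numeral of_nat_power)
  finally show ?thesis .
qed

end

lemma alg_bought_0[simp]: "alg_bought A u 0 = {}"
  by (simp add: alg_bought_def)

lemma alg_bought_Suc: "alg_bought A u (Suc t) = alg_bought A u t \<union> A (take (Suc t) u)"
proof -
  have "{1..Suc t} = insert (Suc t) {1..t}" by auto
  then show ?thesis by (auto simp: alg_bought_def)
qed

lemma alg_bought_mono: "t \<le> t' \<Longrightarrow> alg_bought A u t \<subseteq> alg_bought A u t'"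
  unfolding alg_bought_def by (rule UN_mono) auto

lemma alg_bought_take: "take m u = take m v \<Longrightarrow> t \<le> m \<Longrightarrow> alg_bought A u t = alg_bought A v t"
proof -
  assume e: "take m u = take m v" and t: "t \<le> m"
  have "take s u = take s v" if "s \<le> m" for s
  proof -
    have "take s u = take s (take m u)" using that by (simp add: min_def)
    also have "\<dots> = take s (take m v)" using e by simp
    also have "\<dots> = take s v" using that by (simp add: min_def)
    finally show ?thesis .
  qed
  then show ?thesis using t unfolding alg_bought_def by (intro SUP_cong) auto
qed

lemma HS_top:
  assumes "X \<in> HS k h c"
  shows "\<exists>h' c' b. X = {vx h' c', nb b h' c'} \<and> length h' = k - 1 \<and> prefix h h' \<and> prefix c c'"
proof -
  obtain h1 c1 b where X1: "X = {vx h1 c1, nb b h1 c1}" and l1: "length h1 = k - 1"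
    using assms unfolding HS_def Ed_def by blast
  obtain p where p: "p \<in> X" "intr h c p" using assms unfolding HS_def by blast
  show ?thesis
  proof (cases "p = vx h1 c1")
    case True then show ?thesis using p X1 l1 by (auto simp: intr_def)
  next
    case False
    then have pn: "p = nb b h1 c1" using p X1 by auto
    obtain h' c' where pv: "p = vx h' c'" and ph: "prefix h h'" and pc: "prefix c c'"
      using p(2) by (auto simp: intr_def)
    from nb_cases[of b h1 c1] show ?thesis
    proof
      assume "b \<notin> set h1 \<and> nb b h1 c1 = (if b then 0 else 1)"
      then show ?thesis using pn pv by (auto split: if_splits)
    next
      assume "\<exists>h0 m. h1 = h0 @ b # replicate m (\<not> b) \<and> nb b h1 c1 = vx h0 (take (length h0 + 1) c1)"
      then obtain h0 m where h10: "h1 = h0 @ b # replicate m (\<not> b)"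
          and nbe: "nb b h1 c1 = vx h0 (take (length h0 + 1) c1)" by blast
      have e: "h' = h0" "c' = take (length h0 + 1) c1" using pn pv nbe by auto
      then have "prefix h h1" using ph h10 by (auto simp: prefix_def)
      moreover have "prefix c c1" using pc e(2) prefix_take_trans by blast
      ultimately show ?thesis using X1 l1 by blast
    qed
  qed
qed

lemma HS_comparable:
  assumes "X \<in> HS k h1 c1" "X \<in> HS k h2 c2"
  shows "(prefix h1 h2 \<or> prefix h2 h1) \<and> (prefix c1 c2 \<or> prefix c2 c1)"
proof -
  obtain h' c' b where X: "X = {vx h' c', nb b h' c'}" "length h' = k - 1" "prefix h1 h'" "prefix c1 c'"
    using HS_top[OF assms(1)] by blast
  obtain h'' c'' b' where X': "X = {vx h'' c'', nb b' h'' c''}" "length h'' = k - 1" "prefix h2 h''" "prefix c2 c''"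
    using HS_top[OF assms(2)] by blast
  have "vx h' c' = vx h'' c''"
  proof (rule ccontr)
    assume ne: "vx h' c' \<noteq> vx h'' c''"
    have "vx h' c' \<in> {vx h'' c'', nb b' h'' c''}" using X X' by auto
    then have "vx h' c' = nb b' h'' c''" using ne by auto
    then have "b' \<in> set h'' \<and> h' = lastp b' h''" by (auto simp: nb_def split: if_splits)
    then have "length h' < length h''" using lastp_len by blast
    then show False using X X' by simp
  qed
  then have "h' = h''" "c' = c''" by auto
  then show ?thesis using X X' prefix_same_cases by metis
qed

lemma take_flipl: "n < length c \<Longrightarrow> take n (flipl c) = take n c"
proof -
  assume n: "n < length c"
  have "take n (flipl c) = take n (butlast c)" using n by (simp add: flipl_def)
  also have "\<dots> = take n c" using n by (auto simp: butlast_conv_take min_def)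
  finally show ?thesis .
qed

context L0
begin

lemma GG_chain: "GG u h \<Longrightarrow> prefix g h \<Longrightarrow> prefix (cs u g) (cs u h)"
proof (induction h rule: rev_induct)
  case Nil then show ?case by simp
next
  case (snoc x h)
  have G: "GG u h" using snoc(2) unfolding GG_def by auto
  have p: "prefix (cs u h) (cs u (h @ [x]))" using snoc(2) unfolding GG_def by auto
  from snoc(3) have "g = h @ [x] \<or> prefix g h" by simp
  then show ?case
  proof
    assume "prefix g h"
    then have "prefix (cs u g) (cs u h)" using snoc(1)[OF G] by simp
    then show ?thesis using p prefix_order.trans by blast
  qed simp
qed

lemma waste_disj_aux:
  assumes u: "u \<in> S" and h2: "length h2 < k" and G2: "GG u h2" and sp: "prefix h1 h2" and ne: "h1 \<noteq> h2"
  shows "HS k h1 (flipl (cs u h1)) \<inter> HS k h2 (flipl (cs u h2)) = {}"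
proof (rule ccontr)
  assume "HS k h1 (flipl (cs u h1)) \<inter> HS k h2 (flipl (cs u h2)) \<noteq> {}"
  then obtain X where "X \<in> HS k h1 (flipl (cs u h1))" "X \<in> HS k h2 (flipl (cs u h2))" by blast
  then have cmp: "prefix (flipl (cs u h1)) (flipl (cs u h2)) \<or> prefix (flipl (cs u h2)) (flipl (cs u h1))"
    using HS_comparable by blast
  have l12: "length h1 < length h2" using sp ne by (auto simp: prefix_def)
  have h1: "length h1 < k" using l12 h2 by simp
  have c1: "length (cs u h1) = length h1 + 1" using S_slot(2)[OF u h1] .
  have c2: "length (cs u h2) = length h2 + 1" using S_slot(2)[OF u h2] .
  have ne1: "cs u h1 \<noteq> []" "cs u h2 \<noteq> []" using c1 c2 by auto
  have pc: "prefix (cs u h1) (cs u h2)" using GG_chain[OF G2 sp] .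
  have "prefix (flipl (cs u h1)) (flipl (cs u h2))"
    using cmp prefix_length_le c1 c2 l12 ne1 by fastforce
  then have "flipl (cs u h1) = take (length h1 + 1) (flipl (cs u h2))"
    using c1 ne1 by (simp add: prefix_iff_take)
  also have "\<dots> = take (length h1 + 1) (cs u h2)" using take_flipl c2 l12 by simp
  also have "\<dots> = cs u h1" using pc c1 by (simp add: prefix_iff_take)
  finally show False using flipl_ne[OF ne1(1)] by simp
qed

end

context L0
begin

abbreviation TT :: "(nat list \<Rightarrow> nat set set) \<Rightarrow> nat list \<Rightarrow> nat \<Rightarrow> nat set set" where
  "TT A u t \<equiv> alg_bought A u t"

definition newc :: "(nat list \<Rightarrow> nat set set) \<Rightarrow> bool list \<Rightarrow> nat list \<Rightarrow> nat" where
  "newc A h u = card ((TT A u (idx h + 1) - TT A u (idx h)) \<inter> HS k h (cs u h))"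

definition wastec :: "(nat list \<Rightarrow> nat set set) \<Rightarrow> bool list \<Rightarrow> nat list \<Rightarrow> nat" where
  "wastec A h u = card (TT A u (2 ^ k) \<inter> HS k h (flipl (cs u h)))"

lemma TT_sub:
  assumes A: "online_alg I A" and u: "u \<in> S" and t: "t \<le> 2 ^ k"
  shows "TT A u t \<subseteq> Ed k"
proof (cases "t = 0")
  case False
  then show ?thesis using A u t unfolding online_alg_def by auto
qed simp

lemma TT_fin:
  assumes A: "online_alg I A" and u: "u \<in> S" and t: "t \<le> 2 ^ k"
  shows "finite (TT A u t)"
  using TT_sub[OF A u t] finite_Ed by (rule finite_subset)

lemma new_lb:
  assumes A: "online_alg I A" and u: "u \<in> S" and h: "length h < k"
  shows "2 ^ (k - length h - 1) \<le> newc A h u + card (TT A u (idx h) \<inter> HS k h (cs u h))"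
proof -
  have ik: "idx h + 1 \<le> 2 ^ k" using idx_lt[OF h] by simp
  let ?F = "TT A u (idx h + 1)"
  have F: "?F \<subseteq> Ed k" by (rule TT_sub[OF A u ik])
  have "connects ?F 0 (set (take (idx h + 1) u))"
    using A u ik unfolding online_alg_def by auto
  moreover have "u ! idx h \<in> set (take (idx h + 1) u)"
    using ik S_len[OF u] by (simp add: in_set_conv_nth) (metis lessI less_le_trans nth_take)
  ultimately have "(0, vx h (cs u h)) \<in> (edge_rel ?F)\<^sup>*"
    unfolding connects_def using S_slot(1)[OF u h] by auto
  then have c: "2 ^ (k - length h - 1) \<le> card (?F \<inter> HS k h (cs u h))"
    using cut[OF F _ h S_slot(2)[OF u h]] by simp
  have "?F \<inter> HS k h (cs u h) \<subseteq> ((?F - TT A u (idx h)) \<inter> HS k h (cs u h)) \<union> (TT A u (idx h) \<inter> HS k h (cs u h))"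
    by auto
  moreover have "finite (((?F - TT A u (idx h)) \<inter> HS k h (cs u h)) \<union> (TT A u (idx h) \<inter> HS k h (cs u h)))"
    using TT_fin[OF A u ik] TT_fin[OF A u, of "idx h"] ik by auto
  ultimately have "card (?F \<inter> HS k h (cs u h)) \<le> card (((?F - TT A u (idx h)) \<inter> HS k h (cs u h)) \<union> (TT A u (idx h) \<inter> HS k h (cs u h)))"
    by (simp add: card_mono)
  also have "\<dots> \<le> newc A h u + card (TT A u (idx h) \<inter> HS k h (cs u h))"
    unfolding newc_def by (rule card_Un_le)
  finally show ?thesis using c by simp
qed

lemma waste_lb:
  assumes A: "online_alg I A" and u: "u \<in> S" and h: "length h < k"
  shows "card (TT A u (idx h) \<inter> HS k h (cs u h)) \<le> wastec A h (sig h u)"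
proof -
  have su: "sig h u \<in> S" using sig_facts(1)[OF u h] .
  have ne: "cs u h \<noteq> []" using S_slot(2)[OF u h] by auto
  have c: "flipl (cs (sig h u) h) = cs u h" using sig_facts(2)[OF u h] flipl_flipl[OF ne] by simp
  have "TT A u (idx h) = TT A (sig h u) (idx h)"
    using sig_facts(4)[OF u h] by (intro alg_bought_take[of "idx h"]) auto
  also have "\<dots> \<subseteq> TT A (sig h u) (2 ^ k)" using idx_lt[OF h] by (intro alg_bought_mono) simp
  finally have "TT A u (idx h) \<inter> HS k h (cs u h) \<subseteq> TT A (sig h u) (2 ^ k) \<inter> HS k h (flipl (cs (sig h u) h))"
    using c by auto
  moreover have "finite (TT A (sig h u) (2 ^ k))" using TT_fin[OF A su] by simp
  ultimately show ?thesis unfolding wastec_def by (intro card_mono) auto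
qed

lemma telescope:
  assumes A: "online_alg I A" and u: "u \<in> S"
  shows "N \<le> 2 ^ k \<Longrightarrow> (\<Sum>i<N. card (TT A u (i + 1) - TT A u i)) = card (TT A u N)"
proof (induction N)
  case 0 then show ?case by simp
next
  case (Suc N)
  have f: "finite (TT A u N)" using TT_fin[OF A u] Suc by simp
  have f2: "finite (TT A u (Suc N))" using TT_fin[OF A u] Suc by simp
  have sub: "TT A u N \<subseteq> TT A u (Suc N)" by (rule alg_bought_mono) simp
  have "TT A u (Suc N) = TT A u N \<union> (TT A u (Suc N) - TT A u N)" using sub by auto
  then have "card (TT A u (Suc N)) = card (TT A u N) + card (TT A u (Suc N) - TT A u N)"
    using f f2 by (metis card_Un_disjoint Diff_disjoint finite_Diff)
  then show ?case using Suc by simp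
qed

definition Hs :: "bool list set" where "Hs = {h. length h < k}"

lemma finite_Hs: "finite Hs"
  unfolding Hs_def by (rule finite_short)

lemma sum_new:
  assumes A: "online_alg I A" and u: "u \<in> S"
  shows "(\<Sum>h\<in>Hs. if GG u h then newc A h u else 0) \<le> card (TT A u (2 ^ k))"
proof -
  let ?d = "\<lambda>i. card (TT A u (i + 1) - TT A u i)"
  have "(\<Sum>h\<in>Hs. if GG u h then newc A h u else 0) \<le> (\<Sum>h\<in>Hs. ?d (idx h))"
  proof (rule sum_mono)
    fix h assume h: "h \<in> Hs"
    have "finite (TT A u (idx h + 1))" using TT_fin[OF A u] idx_lt h by (simp add: Hs_def Suc_leI)
    then have "newc A h u \<le> ?d (idx h)" unfolding newc_def by (intro card_mono) auto
    then show "(if GG u h then newc A h u else 0) \<le> ?d (idx h)" by simp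
  qed
  also have "\<dots> = (\<Sum>i\<in>idx ` Hs. ?d i)"
    by (rule sum.reindex_cong[where l = idx, OF _ refl refl, symmetric]) (auto intro: inj_onI)
  also have "\<dots> \<le> (\<Sum>i<2 ^ k. ?d i)"
    using idx_lt by (intro sum_mono2) (auto simp: Hs_def)
  also have "\<dots> = card (TT A u (2 ^ k))" by (rule telescope[OF A u]) simp
  finally show ?thesis .
qed

lemma sum_waste:
  assumes A: "online_alg I A" and u: "u \<in> S"
  shows "(\<Sum>h\<in>Hs. if GG u h then wastec A h u else 0) \<le> card (TT A u (2 ^ k))"
proof -
  let ?H = "{h\<in>Hs. GG u h}"
  let ?W = "\<lambda>h. TT A u (2 ^ k) \<inter> HS k h (flipl (cs u h))"
  have fT: "finite (TT A u (2 ^ k))" using TT_fin[OF A u] by simp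
  have "(\<Sum>h\<in>Hs. if GG u h then wastec A h u else 0) = (\<Sum>h\<in>?H. wastec A h u)"
    using finite_Hs by (simp add: sum.inter_filter)
  also have "\<dots> = (\<Sum>h\<in>?H. card (?W h))" unfolding wastec_def by simp
  also have "\<dots> = card (\<Union>h\<in>?H. ?W h)"
  proof (rule card_UN_disjoint[symmetric])
    show "finite ?H" using finite_Hs by simp
    show "\<forall>h\<in>?H. finite (?W h)" using fT by auto
    show "\<forall>h1\<in>?H. \<forall>h2\<in>?H. h1 \<noteq> h2 \<longrightarrow> ?W h1 \<inter> ?W h2 = {}"
    proof (intro ballI impI)
      fix h1 h2 assume h1: "h1 \<in> ?H" and h2: "h2 \<in> ?H" and ne: "h1 \<noteq> h2"
      show "?W h1 \<inter> ?W h2 = {}"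
      proof (cases "prefix h1 h2 \<or> prefix h2 h1")
        case True
        then show ?thesis
        proof
          assume "prefix h1 h2"
          then show ?thesis using waste_disj_aux[OF u _ _ _ ne] h2 by (auto simp: Hs_def)
        next
          assume "prefix h2 h1"
          then show ?thesis using waste_disj_aux[OF u _ _ _ ne[symmetric]] h1 by (auto simp: Hs_def)
        qed
      next
        case False
        then show ?thesis using HS_comparable by blast
      qed
    qed
  qed
  also have "\<dots> \<le> card (TT A u (2 ^ k))" using fT by (intro card_mono) auto
  finally show ?thesis .
qed

end

context L0
begin

lemma wt_sig: "u \<in> S \<Longrightarrow> length h < k \<Longrightarrow> wt (sig h u) = wt u"
  using sig_facts(5) by (simp add: wt_def weight_Phi)

lemma pair_sum:
  assumes A: "online_alg I A" and h: "length h < k"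
  shows "2 ^ (k - length h - 1) * (\<Sum>u\<in>S. if GG u h then wt u else 0)
     \<le> (\<Sum>u\<in>S. wt u * (if GG u h then real (newc A h u) + real (wastec A h u) else 0))"
proof -
  let ?f = "\<lambda>u. wt u * (if GG u h then real (wastec A h u) else 0)"
  let ?g = "\<lambda>u. wt u * (if GG u h then real (wastec A h (sig h u)) else 0)"
  have swap: "(\<Sum>u\<in>S. ?g u) = (\<Sum>u\<in>S. ?f u)"
  proof (rule sum.reindex_bij_witness[where i = "sig h" and j = "sig h"])
    fix a assume a: "a \<in> S"
    show "sig h (sig h a) = a" using sig_facts(3)[OF a h] .
    show "sig h a \<in> S" using sig_facts(1)[OF a h] .
    show "sig h (sig h a) = a" using sig_facts(3)[OF a h] .
    show "sig h a \<in> S" using sig_facts(1)[OF a h] .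
    show "?f (sig h a) = ?g a"
      using wt_sig[OF a h] sig_facts(6)[OF a h] by simp
  qed
  have pw: "wt u * (if GG u h then real (newc A h u) + real (wastec A h (sig h u)) else 0)
      \<ge> 2 ^ (k - length h - 1) * (if GG u h then wt u else 0)" if u: "u \<in> S" for u
  proof (cases "GG u h")
    case True
    have "2 ^ (k - length h - 1) \<le> newc A h u + wastec A h (sig h u)"
      using new_lb[OF A u h] waste_lb[OF A u h] by linarith
    then have "(2::real) ^ (k - length h - 1) \<le> real (newc A h u) + real (wastec A h (sig h u))"
      by (metis of_nat_add of_nat_le_iff of_nat_numeral of_nat_power)
    then show ?thesis using True wt_pos[of u] by (simp add: mult.commute mult_left_mono)
  qed simp
  have "2 ^ (k - length h - 1) * (\<Sum>u\<in>S. if GG u h then wt u else 0)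
      = (\<Sum>u\<in>S. 2 ^ (k - length h - 1) * (if GG u h then wt u else 0))"
    by (simp add: sum_distrib_left)
  also have "\<dots> \<le> (\<Sum>u\<in>S. wt u * (if GG u h then real (newc A h u) + real (wastec A h (sig h u)) else 0))"
    by (rule sum_mono) (rule pw)
  also have "\<dots> = (\<Sum>u\<in>S. wt u * (if GG u h then real (newc A h u) else 0)) + (\<Sum>u\<in>S. ?g u)"
    unfolding sum.distrib[symmetric] by (rule sum.cong[OF refl]) (simp add: distrib_left)
  also have "\<dots> = (\<Sum>u\<in>S. wt u * (if GG u h then real (newc A h u) else 0)) + (\<Sum>u\<in>S. ?f u)"
    using swap by simp
  also have "\<dots> = (\<Sum>u\<in>S. wt u * (if GG u h then real (newc A h u) + real (wastec A h u) else 0))"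
    unfolding sum.distrib[symmetric] by (rule sum.cong[OF refl]) (simp add: distrib_left)
  finally show ?thesis .
qed

lemma alg_cost_eq: "alg_cost I A u = real (card (TT A u (2 ^ k)))"
  by (simp add: alg_cost_def)

lemma sum_Hs: "(\<Sum>h\<in>Hs. (2::real) ^ (k - length h - 1)) = real k * 2 ^ (k - 1)"
proof -
  have "(\<Sum>j\<in>{..<k}. \<Sum>h\<in>{h \<in> Hs. length h = j}. (2::real) ^ (k - length h - 1))
        = (\<Sum>h\<in>Hs. (2::real) ^ (k - length h - 1))"
    by (rule sum.group) (auto simp: finite_Hs Hs_def finite_short)
  moreover have "(\<Sum>h\<in>{h \<in> Hs. length h = j}. (2::real) ^ (k - length h - 1)) = 2 ^ (k - 1)"
    if j: "j < k" for j
  proof -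
    have e: "{h \<in> Hs. length h = j} = {h. length h = j}" using j by (auto simp: Hs_def)
    have "(\<Sum>h\<in>{h \<in> Hs. length h = j}. (2::real) ^ (k - length h - 1))
        = (\<Sum>h\<in>{h :: bool list. length h = j}. (2::real) ^ (k - j - 1))"
      unfolding e by (rule sum.cong) auto
    also have "\<dots> = 2 ^ j * 2 ^ (k - j - 1)" by (simp add: card_blists)
    also have "\<dots> = 2 ^ (j + (k - j - 1))" by (simp add: power_add)
    also have "j + (k - j - 1) = k - 1" using j by simp
    finally show ?thesis .
  qed
  ultimately show ?thesis by simp
qed

lemma alg_lb:
  assumes A: "online_alg I A"
  shows "(\<Sum>u\<in>S. wt u * alg_cost I A u) \<ge> real k * 2 ^ (k - 1) / 2 * (Z - (\<Sum>u\<in>{u\<in>S. \<not> good u}. wt u))"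
proof -
  let ?G = "\<lambda>h u. if GG u h then real (newc A h u) + real (wastec A h u) else 0"
  have pw: "(\<Sum>h\<in>Hs. ?G h u) \<le> 2 * alg_cost I A u" if u: "u \<in> S" for u
  proof -
    have a: "(\<Sum>h\<in>Hs. if GG u h then newc A h u else 0) \<le> card (TT A u (2 ^ k))"
      by (rule sum_new[OF A u])
    have b: "(\<Sum>h\<in>Hs. if GG u h then wastec A h u else 0) \<le> card (TT A u (2 ^ k))"
      by (rule sum_waste[OF A u])
    have "(\<Sum>h\<in>Hs. ?G h u) = (\<Sum>h\<in>Hs. real (if GG u h then newc A h u else 0) + real (if GG u h then wastec A h u else 0))"
      by (rule sum.cong) auto
    also have "\<dots> = real (\<Sum>h\<in>Hs. if GG u h then newc A h u else 0) + real (\<Sum>h\<in>Hs. if GG u h then wastec A h u else 0)"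
      by (simp only: sum.distrib of_nat_sum)
    finally have "(\<Sum>h\<in>Hs. ?G h u) = real (\<Sum>h\<in>Hs. if GG u h then newc A h u else 0) + real (\<Sum>h\<in>Hs. if GG u h then wastec A h u else 0)" .
    also have "\<dots> \<le> real (card (TT A u (2 ^ k))) + real (card (TT A u (2 ^ k)))"
      using a b by (simp only: of_nat_le_iff add_mono)
    finally show ?thesis by (simp add: alg_cost_eq)
  qed
  have Gb: "(\<Sum>u\<in>S. if GG u h then wt u else 0) \<ge> Z - (\<Sum>u\<in>{u\<in>S. \<not> good u}. wt u)"
    if h: "h \<in> Hs" for h
  proof -
    have "Z = (\<Sum>u\<in>S. if good u then wt u else 0) + (\<Sum>u\<in>{u\<in>S. \<not> good u}. wt u)"
      unfolding Z_def using finite_S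
      by (simp add: sum.inter_filter sum.distrib[symmetric]) (rule sum.cong, auto)
    moreover have "(\<Sum>u\<in>S. if good u then wt u else 0) \<le> (\<Sum>u\<in>S. if GG u h then wt u else 0)"
      using good_GG h wt_pos by (intro sum_mono) (auto simp: Hs_def less_imp_le)
    ultimately show ?thesis by simp
  qed
  have "real k * 2 ^ (k - 1) * (Z - (\<Sum>u\<in>{u\<in>S. \<not> good u}. wt u))
      = (\<Sum>h\<in>Hs. 2 ^ (k - length h - 1) * (Z - (\<Sum>u\<in>{u\<in>S. \<not> good u}. wt u)))"
    unfolding sum_distrib_right[symmetric] sum_Hs ..
  also have "\<dots> \<le> (\<Sum>h\<in>Hs. 2 ^ (k - length h - 1) * (\<Sum>u\<in>S. if GG u h then wt u else 0))"
    using Gb by (intro sum_mono mult_left_mono) auto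
  also have "\<dots> \<le> (\<Sum>h\<in>Hs. \<Sum>u\<in>S. wt u * ?G h u)"
    using pair_sum[OF A] by (intro sum_mono) (auto simp: Hs_def)
  also have "\<dots> = (\<Sum>u\<in>S. wt u * (\<Sum>h\<in>Hs. ?G h u))"
    by (simp add: sum.swap[of _ Hs] sum_distrib_left)
  also have "\<dots> \<le> (\<Sum>u\<in>S. wt u * (2 * alg_cost I A u))"
    using pw wt_pos by (intro sum_mono mult_left_mono) (auto simp: less_imp_le)
  also have "\<dots> = 2 * (\<Sum>u\<in>S. wt u * alg_cost I A u)"
    by (simp add: sum_distrib_left algebra_simps)
  finally show ?thesis by simp
qed

end

context L0
begin

lemma Hyp_contains:
  assumes "e \<in> Hyp k" "i \<in> e"
  shows "e \<in> {{i div 2, i}, {i, 2 * i}, {i, 2 * i + 1}}"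
proof -
  obtain g x where e: "e = {idx g, idx (g @ [x])}" using assms(1) unfolding Hyp_def by blast
  then have "i = idx g \<or> i = 2 * idx g + (if x then 1 else 0)" using assms(2) by (auto simp: idx_snoc)
  then show ?thesis using e by (cases x) (auto simp: idx_snoc)
qed

lemma delta_term_le:
  assumes u: "u \<in> S"
  shows "\<bar>\<Sum>e\<in>{e\<in>Hyp k. i \<in> e}. psiL L e u\<bar> \<le> 3 * L"
proof -
  let ?E = "{e\<in>Hyp k. i \<in> e}"
  have sub: "?E \<subseteq> {{i div 2, i}, {i, 2 * i}, {i, 2 * i + 1}}" using Hyp_contains by blast
  have fin: "finite ?E" using finite_Hyp by simp
  have "card ?E \<le> card {{i div 2, i}, {i, 2 * i}, {i, 2 * i + 1}}" by (rule card_mono[OF _ sub]) simp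
  also have "\<dots> \<le> 3" by (simp add: card_insert_le_m1)
  finally have c3: "card ?E \<le> 3" .
  have nn: "0 \<le> (\<Sum>e\<in>?E. psiL L e u)" using Lpos by (intro sum_nonneg) (simp add: psiL_def)
  have "(\<Sum>e\<in>?E. psiL L e u) \<le> of_nat (card ?E) * L"
    using Lpos by (intro sum_bounded_above) (simp add: psiL_def)
  also have "\<dots> \<le> 3 * L" using c3 Lpos by (intro mult_right_mono) auto
  finally show ?thesis using nn by simp
qed

lemma delta_bounds: "L \<le> mrf_delta I \<and> mrf_delta I \<le> 3 * L"
proof -
  let ?f = "\<lambda>(i, u). \<bar>\<Sum>e\<in>{e\<in>Hyp k. i \<in> e}. psiL L e u\<bar>"
  let ?M = "?f ` ({..<(2::nat) ^ k} \<times> S)"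
  have md: "mrf_delta I = Max ?M" by (simp add: mrf_delta_def)
  have fin: "finite ?M" using finite_S by simp
  have "(0, u0) \<in> {..<(2::nat) ^ k} \<times> S" using u0_S by simp
  then have ne: "?M \<noteq> {}" by blast
  have up: "mrf_delta I \<le> 3 * L"
    unfolding md using fin ne delta_term_le by (subst Max_le_iff) auto
  have k2': "(2::nat) < 2 ^ k"
  proof -
    have "(2::nat) ^ 1 < 2 ^ k" using k2 by (intro power_strict_increasing) auto
    then show ?thesis by simp
  qed
  have e0: "{idx [], idx [False]} \<in> Hyp k" using k2 unfolding Hyp_def by force
  have e0': "{idx [], idx [False]} = {1, 2::nat}" by (simp add: idx_def numeral_2_eq_2)
  have g0: "prefix (cs u0 []) (cs u0 ([] @ [False]))"
    using u0_good k2 unfolding good_def by (metis Suc_le_lessD list.size(3) numeral_2_eq_2 Suc_eq_plus1)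
  have "psiL L {1, 2} u0 = L" using psi_cs[of L "[]" False u0] g0 e0' by simp
  moreover have "psiL L {1, 2} u0 \<le> (\<Sum>e\<in>{e\<in>Hyp k. 2 \<in> e}. psiL L e u0)"
    using e0 e0' finite_Hyp Lpos by (intro member_le_sum) (auto simp: psiL_def)
  ultimately have "L \<le> ?f (2, u0)" by simp
  moreover have "?f (2, u0) \<in> ?M" using u0_S k2' by auto
  ultimately have "L \<le> Max ?M" using fin by (meson Max_ge order_trans)
  then show ?thesis using up md by simp
qed

end

lemma exp_ge_pow2: "exp (real n) \<ge> 2 ^ n"
proof -
  have "(2::real) \<le> exp 1" using exp_ge_add_one_self[of 1] by simp
  then have "(2::real) ^ n \<le> exp 1 ^ n" by (rule power_mono) simp
  also have "exp 1 ^ n = exp (real n)" using exp_of_nat_mult[of n "1::real"] by simp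
  finally show ?thesis .
qed

context L0
begin

lemma main:
  assumes A: "online_alg I A" and Ld: "L = 3 * real k + 1" and al: "\<alpha> < real k / 16"
  shows "\<not> competitive I A \<alpha>"
proof -
  define P :: real where "P = 2 ^ k"
  have P1: "P \<ge> 4"
  proof -
    have "(2::real) ^ 2 \<le> 2 ^ k" using k2 by (intro power_increasing) auto
    then show ?thesis by (simp add: P_def)
  qed
  have pk1: "(2::real) ^ (k - 1) = P / 2"
  proof -
    have "k = Suc (k - 1)" using k2 by simp
    then have "(2::real) ^ k = 2 * 2 ^ (k - 1)" by (metis power_Suc)
    then show ?thesis unfolding P_def by simp
  qed
  have p4: "(4::real) ^ k = P * P"
  proof -
    have "(4::real) ^ k = (2 * 2) ^ k" by simp
    also have "\<dots> = 2 ^ k * 2 ^ k" by (rule power_mult_distrib)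
    finally show ?thesis unfolding P_def .
  qed
  have p2k1: "(2::real) ^ (2 * k + 1) = 2 * P * P"
  proof -
    have "2 * k + 1 = Suc (k + k)" by simp
    then have "(2::real) ^ (2 * k + 1) = 2 * (2 ^ k * 2 ^ k)" by (simp only: power_Suc power_add)
    then show ?thesis unfolding P_def by simp
  qed
  have p3k1: "(2::real) ^ (3 * k + 1) = 2 * P * P * P"
  proof -
    have "3 * k + 1 = Suc (k + k + k)" by simp
    then have "(2::real) ^ (3 * k + 1) = 2 * (2 ^ k * 2 ^ k * 2 ^ k)" by (simp only: power_Suc power_add)
    then show ?thesis unfolding P_def by simp
  qed
  define \<beta> where "\<beta> = (\<Sum>u\<in>{u\<in>S. \<not> good u}. wt u)"
  have Zp: "Z > 0" by (rule Z_pos)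
  have \<beta>0: "\<beta> \<ge> 0" unfolding \<beta>_def using wt_pos by (intro sum_nonneg) (auto intro: less_imp_le)
  have eL: "exp L \<ge> 2 * P * P * P"
  proof -
    have "real (3 * k + 1) = L" using Ld by simp
    then show ?thesis using exp_ge_pow2[of "3 * k + 1"] unfolding p3k1 by simp
  qed
  have \<beta>b: "\<beta> \<le> Z / P"
  proof -
    have "\<beta> \<le> 2 ^ (2 * k + 1) * exp (- L) * Z" unfolding \<beta>_def by (rule bad_bound)
    also have "\<dots> = 2 * P * P * Z / exp L" using p2k1 by (simp add: exp_minus field_simps)
    also have "\<dots> \<le> 2 * P * P * Z / (2 * P * P * P)"
      using eL P1 Zp by (intro divide_left_mono) auto
    also have "\<dots> = Z / P" using P1 by (simp add: field_simps)
    finally show ?thesis .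
  qed
  have \<beta>h: "\<beta> \<le> Z / 2"
  proof -
    have zz: "Z / P \<le> Z / 2" using P1 Zp by (intro divide_left_mono) auto
    show ?thesis using \<beta>b zz by linarith
  qed
  define So where "So = (\<Sum>u\<in>S. wt u * opt I u)"
  define Sa where "Sa = (\<Sum>u\<in>S. wt u * alg_cost I A u)"
  have Eo: "expect I (opt I) = So / Z" by (simp add: expect_def So_def Z_def wt_def)
  have Ea: "expect I (alg_cost I A) = Sa / Z" by (simp add: expect_def Sa_def Z_def wt_def)
  have So1: "So \<ge> Z"
  proof -
    have "So \<ge> (\<Sum>u\<in>S. wt u * 1)" unfolding So_def
      using opt_ge1 wt_pos by (intro sum_mono mult_left_mono) (auto intro: less_imp_le)
    then show ?thesis by (simp add: Z_def)
  qed
  have So2: "So \<le> 2 * P * Z"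
  proof -
    have "So \<le> (\<Sum>u\<in>S. (if good u then wt u * P else 0) + (if \<not> good u then wt u * (P * P) else 0))"
      unfolding So_def
    proof (rule sum_mono)
      fix u assume u: "u \<in> S"
      have w: "wt u \<ge> 0" using wt_pos[of u] by simp
      show "wt u * opt I u \<le> (if good u then wt u * P else 0) + (if \<not> good u then wt u * (P * P) else 0)"
      proof (cases "good u")
        case True then show ?thesis using opt_good[OF u True] w by (simp add: P_def mult_left_mono)
      next
        case False then show ?thesis using opt_all[OF u] w p4 by (simp add: mult_left_mono)
      qed
    qed
    also have "\<dots> = (\<Sum>u\<in>S. if good u then wt u * P else 0) + (\<Sum>u\<in>S. if \<not> good u then wt u * (P * P) else 0)"
      by (rule sum.distrib)
    also have "(\<Sum>u\<in>S. if good u then wt u * P else 0) = P * (\<Sum>u\<in>S. if good u then wt u else 0)"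
      unfolding sum_distrib_left by (rule sum.cong) auto
    also have "(\<Sum>u\<in>S. if \<not> good u then wt u * (P * P) else 0) = P * P * (\<Sum>u\<in>S. if \<not> good u then wt u else 0)"
      unfolding sum_distrib_left by (rule sum.cong) auto
    also have "(\<Sum>u\<in>S. if \<not> good u then wt u else 0) = \<beta>"
      unfolding \<beta>_def using finite_S by (simp add: sum.inter_filter)
    finally have so: "So \<le> P * (\<Sum>u\<in>S. if good u then wt u else 0) + P * P * \<beta>" .
    have "(\<Sum>u\<in>S. if good u then wt u else 0) \<le> Z"
      unfolding Z_def using wt_pos by (intro sum_mono) (auto intro: less_imp_le)
    then have "P * (\<Sum>u\<in>S. if good u then wt u else 0) \<le> P * Z" using P1 by (intro mult_left_mono) auto
    then have "P * (\<Sum>u\<in>S. if good u then wt u else 0) + P * P * \<beta> \<le> P * Z + P * P * (Z / P)"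
      using \<beta>b P1 by (intro add_mono mult_left_mono) auto
    also have "\<dots> = 2 * P * Z" using P1 by (simp add: field_simps)
    finally show ?thesis using so by simp
  qed
  have Sa1: "Sa \<ge> real k * P / 8 * Z"
  proof -
    have "Sa \<ge> real k * 2 ^ (k - 1) / 2 * (Z - \<beta>)" unfolding Sa_def \<beta>_def by (rule alg_lb[OF A])
    moreover have "real k * 2 ^ (k - 1) / 2 * (Z - \<beta>) \<ge> real k * (P / 2) / 2 * (Z / 2)"
      unfolding pk1 using \<beta>h P1 by (intro mult_left_mono) auto
    moreover have "real k * (P / 2) / 2 * (Z / 2) = real k * P / 8 * Z" by simp
    ultimately show ?thesis by linarith
  qed
  show ?thesis
  proof
    assume "competitive I A \<alpha>"
    then have c: "Sa / Z \<le> \<alpha> * (So / Z)" unfolding competitive_def Eo Ea .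
    then have "Sa \<le> \<alpha> * So" using Zp by (simp add: field_simps)
    also have "\<alpha> * So < real k / 16 * So" using al So1 Zp by (intro mult_strict_right_mono) auto
    also have "\<dots> \<le> real k / 16 * (2 * P * Z)" using So2 by (intro mult_left_mono) auto
    also have "\<dots> = real k * P / 8 * Z" by simp
    finally show False using Sa1 by simp
  qed
qed

end

theorem corollary5p5:
  shows "\<exists>c>0. \<forall>D::real. \<exists>I. instance_ok I \<and> mrf_delta I \<ge> D \<and>
           (\<forall>A. online_alg I A \<longrightarrow> (\<forall>\<alpha>. \<alpha> < c * mrf_delta I \<longrightarrow> \<not> competitive I A \<alpha>))"
proof (intro exI[of _ "1/176"] conjI allI)
  show "(0::real) < 1 / 176" by simp
  fix D :: real
  define k where "k = max 2 (nat \<lceil>D\<rceil>)"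
  define L where "L = 3 * real k + 1"
  have k2: "k \<ge> 2" by (simp add: k_def)
  have L0: "L \<ge> 0" by (simp add: L_def)
  interpret L0 k L using k2 L0 by unfold_locales
  have db: "L \<le> mrf_delta I \<and> mrf_delta I \<le> 3 * L" by (rule delta_bounds)
  have kD: "real k \<ge> D" unfolding k_def by linarith
  show "\<exists>I. instance_ok I \<and> mrf_delta I \<ge> D \<and>
           (\<forall>A. online_alg I A \<longrightarrow> (\<forall>\<alpha>. \<alpha> < 1 / 176 * mrf_delta I \<longrightarrow> \<not> competitive I A \<alpha>))"
  proof (intro exI[of _ "inst k L"] conjI allI impI)
    show "instance_ok (inst k L)" by (rule inst_ok[OF k2])
    show "D \<le> mrf_delta (inst k L)" using db kD by (simp add: L_def)
    fix A \<alpha> assume A: "online_alg (inst k L) A" and al: "\<alpha> < 1 / 176 * mrf_delta (inst k L)"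
    have "1 / 176 * mrf_delta (inst k L) \<le> 1 / 176 * (3 * L)" using db by simp
    also have "\<dots> \<le> real k / 16" using k2 by (simp add: L_def)
    finally have "\<alpha> < real k / 16" using al by simp
    then show "\<not> competitive (inst k L) A \<alpha>" using main[OF A L_def] by simp
  qed
qed

end
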